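(* Let $S$ be a semigroup with an idempotent $e$ (i.e. $ee=e$) such that the subsemigroup $eSe=\{exe : x\in S\}$ satisfies either $eSe=Se$ or $eSe=eS$. Then $BS\simeq B(eSe)$.
   Context: For a semigroup $S$, the classifying space $BS$ is the geometric realization of the $\Delta$-set whose $n$-simplices are the $n$-tuples $(x_1,\dots,x_n)\in S^n$, with face maps $d_0(x_1,\dots,x_n)=(x_2,\dots,x_n)$, $d_i(x_1,\dots,x_n)=(x_1,\dots,x_{i-1},x_ix_{i+1},x_{i+2},\dots,x_n)$ for $0<i<n$, and $d_n(x_1,\dots,x_n)=(x_1,\dots,x_{n-1})$. Here $Se=\{xe:x\in S\}$ and $eS=\{ex:x\in S\}$. *)

theory Defs
  imports "HOL-Analysis.Analysis" "HOL-Homology.Homology"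
begin

lemma istopology_quotient:
  "istopology (\<lambda>U. U \<subseteq> f ` topspace T \<and> openin T {x \<in> topspace T. f x \<in> U})"
  unfolding istopology_def
proof (rule conjI; intro allI impI)
  fix S U assume a: "S \<subseteq> f ` topspace T \<and> openin T {x \<in> topspace T. f x \<in> S}"
    "U \<subseteq> f ` topspace T \<and> openin T {x \<in> topspace T. f x \<in> U}"
  have "{x \<in> topspace T. f x \<in> S \<inter> U} =
        {x \<in> topspace T. f x \<in> S} \<inter> {x \<in> topspace T. f x \<in> U}" by blast
  show "S \<inter> U \<subseteq> f ` topspace T \<and> openin T {x \<in> topspace T. f x \<in> S \<inter> U}"
  proof (intro conjI)
    show "S \<inter> U \<subseteq> f ` topspace T" using a by blast
    have "openin T ({x \<in> topspace T. f x \<in> S} \<inter> {x \<in> topspace T. f x \<in> U})"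
      using a by (intro openin_Int) auto
    then show "openin T {x \<in> topspace T. f x \<in> S \<inter> U}"
      by (simp only: \<open>{x \<in> topspace T. f x \<in> S \<inter> U} = _\<close>)
  qed
next
  fix K assume a: "\<forall>S\<in>K. S \<subseteq> f ` topspace T \<and> openin T {x \<in> topspace T. f x \<in> S}"
  have eq: "{x \<in> topspace T. f x \<in> \<Union>K} = \<Union>((\<lambda>S. {x \<in> topspace T. f x \<in> S}) ` K)" by blast
  have op: "openin T (\<Union>((\<lambda>S. {x \<in> topspace T. f x \<in> S}) ` K))"
    using a by (intro openin_Union) auto
  show "\<Union>K \<subseteq> f ` topspace T \<and> openin T {x \<in> topspace T. f x \<in> \<Union>K}"
  proof (intro conjI)
    show "\<Union>K \<subseteq> f ` topspace T" using a by blast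
    show "openin T {x \<in> topspace T. f x \<in> \<Union>K}" unfolding eq by (rule op)
  qed
qed

definition quotient_top :: "'a topology \<Rightarrow> ('a \<Rightarrow> 'b) \<Rightarrow> 'b topology" where
  "quotient_top T f = topology (\<lambda>U. U \<subseteq> f ` topspace T \<and> openin T {x \<in> topspace T. f x \<in> U})"

text \<open>The face d n i corresponds to the coface map of the standard simplex
  that inserts a zero in coordinate i, i.e. simplical_face i.\<close>

definition delta_set :: "(nat \<Rightarrow> 'b set) \<Rightarrow> (nat \<Rightarrow> nat \<Rightarrow> 'b \<Rightarrow> 'b) \<Rightarrow> bool" where
  "delta_set X d \<longleftrightarrow>
     (\<forall>n i x. x \<in> X (Suc n) \<and> i \<le> Suc n \<longrightarrow> d (Suc n) i x \<in> X n) \<and>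
     (\<forall>n i j x. x \<in> X (Suc (Suc n)) \<and> i < j \<and> j \<le> Suc (Suc n) \<longrightarrow>
        d (Suc n) i (d (Suc (Suc n)) j x) = d (Suc n) (j - 1) (d (Suc (Suc n)) i x))"

definition simplices_sum :: "(nat \<Rightarrow> 'b set) \<Rightarrow> ((nat \<times> 'b) \<times> (nat \<Rightarrow> real)) topology" where
  "simplices_sum X = sum_topology (\<lambda>(n, x). subtopology (powertop_real UNIV) (standard_simplex n))
                                  (SIGMA n:UNIV. X n)"

definition realization_rel ::
  "(nat \<Rightarrow> 'b set) \<Rightarrow> (nat \<Rightarrow> nat \<Rightarrow> 'b \<Rightarrow> 'b) \<Rightarrow>
   (((nat \<times> 'b) \<times> (nat \<Rightarrow> real)) \<times> ((nat \<times> 'b) \<times> (nat \<Rightarrow> real))) set" where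
  "realization_rel X d =
     {(((n, d (Suc n) i x), t), ((Suc n, x), simplical_face i t)) | n i x t.
        x \<in> X (Suc n) \<and> i \<le> Suc n \<and> t \<in> standard_simplex n}"

definition realization_class :: "(nat \<Rightarrow> 'b set) \<Rightarrow> (nat \<Rightarrow> nat \<Rightarrow> 'b \<Rightarrow> 'b) \<Rightarrow>
   ((nat \<times> 'b) \<times> (nat \<Rightarrow> real)) \<Rightarrow> ((nat \<times> 'b) \<times> (nat \<Rightarrow> real)) set" where
  "realization_class X d p = ((realization_rel X d \<union> (realization_rel X d)\<inverse>)\<^sup>*) `` {p}"

definition geometric_realization :: "(nat \<Rightarrow> 'b set) \<Rightarrow> (nat \<Rightarrow> nat \<Rightarrow> 'b \<Rightarrow> 'b) \<Rightarrow>
   ((nat \<times> 'b) \<times> (nat \<Rightarrow> real)) set topology" where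
  "geometric_realization X d = quotient_top (simplices_sum X) (realization_class X d)"

definition semigroup_on :: "'a set \<Rightarrow> ('a \<Rightarrow> 'a \<Rightarrow> 'a) \<Rightarrow> bool" where
  "semigroup_on S m \<longleftrightarrow> (\<forall>x\<in>S. \<forall>y\<in>S. m x y \<in> S) \<and>
     (\<forall>x\<in>S. \<forall>y\<in>S. \<forall>z\<in>S. m (m x y) z = m x (m y z))"

definition nerve_simplices :: "'a set \<Rightarrow> nat \<Rightarrow> 'a list set" where
  "nerve_simplices S n = {xs. length xs = n \<and> set xs \<subseteq> S}"

text \<open>Face maps on n-tuples (x_1,...,x_n), i = 0..n (list index k holds x_(k+1)).\<close>
definition nerve_face :: "('a \<Rightarrow> 'a \<Rightarrow> 'a) \<Rightarrow> nat \<Rightarrow> nat \<Rightarrow> 'a list \<Rightarrow> 'a list" where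
  "nerve_face m n i xs =
     (if i = 0 then tl xs
      else if i = n then butlast xs
      else take (i - 1) xs @ [m (xs ! (i - 1)) (xs ! i)] @ drop (i + 1) xs)"

definition classifying_space :: "'a set \<Rightarrow> ('a \<Rightarrow> 'a \<Rightarrow> 'a) \<Rightarrow>
   ((nat \<times> 'a list) \<times> (nat \<Rightarrow> real)) set topology" where
  "classifying_space S m = geometric_realization (nerve_simplices S) (nerve_face m)"

end

theory Submission
  imports Defs
begin

lemma openin_quotient_top:
  "openin (quotient_top T f) U \<longleftrightarrow> U \<subseteq> f ` topspace T \<and> openin T {x \<in> topspace T. f x \<in> U}"
  unfolding quotient_top_def using istopology_quotient[of f T] by (simp add: topology_inverse')

lemma topspace_quotient_top: "topspace (quotient_top T f) = f ` topspace T"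
proof
  show "topspace (quotient_top T f) \<subseteq> f ` topspace T"
    using openin_quotient_top[of T f "topspace (quotient_top T f)"] by auto
  have "{x \<in> topspace T. f x \<in> f ` topspace T} = topspace T" by auto
  then have "openin (quotient_top T f) (f ` topspace T)" by (simp add: openin_quotient_top)
  then show "f ` topspace T \<subseteq> topspace (quotient_top T f)" by (rule openin_subset)
qed

lemma quotient_map_quotient_top: "quotient_map T (quotient_top T f) f"
  unfolding quotient_map_def by (auto simp: topspace_quotient_top openin_quotient_top)

lemma quotient_map_real:
  "quotient_map (simplices_sum X) (geometric_realization X d) (realization_class X d)"
  unfolding geometric_realization_def by (rule quotient_map_quotient_top)

lemma topspace_real:
  "topspace (geometric_realization X d) = realization_class X d ` topspace (simplices_sum X)"
  unfolding geometric_realization_def by (rule topspace_quotient_top)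

lemma topspace_simplices_sum:
  "topspace (simplices_sum X) = {((n,x),t). x \<in> X n \<and> t \<in> standard_simplex n}"
  unfolding simplices_sum_def by auto

lemma class_eq_rel:
  assumes "(a,b) \<in> realization_rel X d"
  shows "realization_class X d a = realization_class X d b"
proof -
  let ?E = "(realization_rel X d \<union> (realization_rel X d)\<inverse>)\<^sup>*"
  have ab: "(a,b) \<in> ?E" "(b,a) \<in> ?E" using assms by auto
  have "(a,x) \<in> ?E \<longleftrightarrow> (b,x) \<in> ?E" for x
    using ab rtrancl_trans[of b a _ x] rtrancl_trans[of a b _ x] by blast
  then show ?thesis unfolding realization_class_def by auto
qed

lemma respects_E:
  assumes "\<And>a b. (a,b) \<in> realization_rel X d \<Longrightarrow> F a = F b"
    and "(p,p') \<in> (realization_rel X d \<union> (realization_rel X d)\<inverse>)\<^sup>*"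
  shows "F p = F p'"
  using assms(2)
proof (induction rule: rtrancl_induct)
  case base then show ?case by simp
next
  case (step y z)
  from step(2) have "F y = F z"
  proof
    assume "(y,z) \<in> realization_rel X d" then show ?thesis by (rule assms(1))
  next
    assume "(y,z) \<in> (realization_rel X d)\<inverse>" then show ?thesis using assms(1)[of z y] by simp
  qed
  then show ?case using step(3) by simp
qed

definition rep :: "(nat \<Rightarrow> 'b set) \<Rightarrow> (nat \<Rightarrow> nat \<Rightarrow> 'b \<Rightarrow> 'b) \<Rightarrow> _ \<Rightarrow> _" where
  "rep X d c = (SOME p. p \<in> topspace (simplices_sum X) \<and> realization_class X d p = c)"

definition lift where "lift X d F c = F (rep X d c)"

lemma lift_class:
  assumes "\<And>a b. (a,b) \<in> realization_rel X d \<Longrightarrow> F a = F b"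
    and "p \<in> topspace (simplices_sum X)"
  shows "lift X d F (realization_class X d p) = F p"
proof -
  define c where "c = realization_class X d p"
  define E where "E = (realization_rel X d \<union> (realization_rel X d)\<inverse>)\<^sup>*"
  have "\<exists>p'. p' \<in> topspace (simplices_sum X) \<and> realization_class X d p' = c"
    using assms(2) unfolding c_def by blast
  then have r: "rep X d c \<in> topspace (simplices_sum X) \<and> realization_class X d (rep X d c) = c"
    unfolding rep_def by (rule someI_ex)
  have "(rep X d c, rep X d c) \<in> E" unfolding E_def by (rule rtrancl_refl)
  then have "rep X d c \<in> realization_class X d (rep X d c)"
    unfolding realization_class_def E_def by blast
  then have "rep X d c \<in> E `` {p}"
    using r unfolding c_def realization_class_def E_def by simp
  then have "(p, rep X d c) \<in> E" by blast
  then have "F p = F (rep X d c)" unfolding E_def by (metis respects_E assms(1))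
  then show ?thesis unfolding lift_def c_def by simp
qed

lemma continuous_lift:
  assumes "\<And>a b. (a,b) \<in> realization_rel X d \<Longrightarrow> F a = F b"
    and "continuous_map (simplices_sum X) Z F"
  shows "continuous_map (geometric_realization X d) Z (lift X d F)"
proof (rule continuous_compose_quotient_map[OF quotient_map_real])
  have "\<And>p. p \<in> topspace (simplices_sum X) \<Longrightarrow> F p = (lift X d F \<circ> realization_class X d) p"
    using lift_class[of X d F, OF assms(1)] by (simp only: o_def)
  then show "continuous_map (simplices_sum X) Z (lift X d F \<circ> realization_class X d)"
    using assms(2) by (rule continuous_map_eq[rotated])
qed

lemma continuous_map_from_sum:
  assumes "\<And>j. j \<in> J \<Longrightarrow> continuous_map (Y j) W (\<lambda>y. h (j,y))"
  shows "continuous_map (sum_topology Y J) W h"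
  unfolding continuous_map_def
proof (intro conjI allI impI)
  show "h \<in> topspace (sum_topology Y J) \<rightarrow> topspace W"
  proof
    fix w assume "w \<in> topspace (sum_topology Y J)"
    then obtain j y where w: "w = (j,y)" "j \<in> J" "y \<in> topspace (Y j)"
      by auto
    show "h w \<in> topspace W"
      using continuous_map_image_subset_topspace[OF assms[OF w(2)]] w by auto
  qed
  fix U assume U: "openin W U"
  show "openin (sum_topology Y J) {x \<in> topspace (sum_topology Y J). h x \<in> U}"
    unfolding openin_sum_topology
  proof (intro conjI ballI)
    fix j assume j: "j \<in> J"
    have "{x. (j, x) \<in> {x \<in> topspace (sum_topology Y J). h x \<in> U}} = {y \<in> topspace (Y j). h (j,y) \<in> U}"
      using j by auto
    then show "openin (Y j) {x. (j, x) \<in> {x \<in> topspace (sum_topology Y J). h x \<in> U}}"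
      using openin_continuous_map_preimage[OF assms[OF j] U] by simp
  qed auto
qed

lemma continuous_map_from_prod_sum:
  assumes "\<And>j. j \<in> J \<Longrightarrow> continuous_map (prod_topology Z (Y j)) W (\<lambda>(z,y). h (z,(j,y)))"
  shows "continuous_map (prod_topology Z (sum_topology Y J)) W h"
  unfolding continuous_map_def
proof (intro conjI allI impI)
  show "h \<in> topspace (prod_topology Z (sum_topology Y J)) \<rightarrow> topspace W"
  proof
    fix w assume "w \<in> topspace (prod_topology Z (sum_topology Y J))"
    then obtain z j y where w: "w = (z,(j,y))" "j \<in> J" "z \<in> topspace Z" "y \<in> topspace (Y j)"
      by auto
    have "(\<lambda>(z,y). h (z,(j,y))) (z,y) \<in> topspace W"
      using continuous_map_image_subset_topspace[OF assms[OF w(2)]] w(3,4) by auto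
    then show "h w \<in> topspace W" using w by simp
  qed
  fix U assume U: "openin W U"
  show "openin (prod_topology Z (sum_topology Y J)) {x \<in> topspace (prod_topology Z (sum_topology Y J)). h x \<in> U}"
    unfolding openin_prod_topology_alt
  proof (intro allI impI)
    fix z p assume zp: "(z, p) \<in> {x \<in> topspace (prod_topology Z (sum_topology Y J)). h x \<in> U}"
    obtain j y where p: "p = (j,y)" by (cases p)
    have j: "j \<in> J" and zy: "z \<in> topspace Z" "y \<in> topspace (Y j)" and hU: "h (z,(j,y)) \<in> U"
      using zp p by auto
    define P where "P = {x \<in> topspace (prod_topology Z (Y j)). (\<lambda>(z,y). h (z,(j,y))) x \<in> U}"
    have "openin (prod_topology Z (Y j)) P"
      unfolding P_def using openin_continuous_map_preimage[OF assms[OF j] U] .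
    moreover have "(z,y) \<in> P"
      unfolding P_def using zy hU by auto
    ultimately have "\<exists>A B. openin Z A \<and> openin (Y j) B \<and> z \<in> A \<and> y \<in> B \<and> A \<times> B \<subseteq> P"
      unfolding openin_prod_topology_alt by (elim allE impE)
    then obtain A B where AB: "openin Z A" "openin (Y j) B" "z \<in> A" "y \<in> B"
      "A \<times> B \<subseteq> P" by blast
    have "openin (sum_topology Y J) ((\<lambda>x. (j,x)) ` B)"
      using open_map_component_injection[OF j] AB(2) unfolding open_map_def by blast
    moreover have "A \<times> ((\<lambda>x. (j,x)) ` B) \<subseteq> {x \<in> topspace (prod_topology Z (sum_topology Y J)). h x \<in> U}"
    proof
      fix w assume "w \<in> A \<times> ((\<lambda>x. (j,x)) ` B)"
      then obtain a b where w: "w = (a,(j,b))" "a \<in> A" "b \<in> B" by blast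
      then have "(a,b) \<in> P"
        using AB(5) by blast
      then show "w \<in> {x \<in> topspace (prod_topology Z (sum_topology Y J)). h x \<in> U}"
        using w j unfolding P_def by simp
    qed
    moreover have "p \<in> (\<lambda>x. (j,x)) ` B" using p AB(4) by blast
    ultimately show "\<exists>A' B'. openin Z A' \<and> openin (sum_topology Y J) B' \<and> z \<in> A' \<and> p \<in> B' \<and>
        A' \<times> B' \<subseteq> {x \<in> topspace (prod_topology Z (sum_topology Y J)). h x \<in> U}"
      using AB(1,3) by blast
  qed
qed


lemma sg_closed: "semigroup_on S m \<Longrightarrow> x \<in> S \<Longrightarrow> y \<in> S \<Longrightarrow> m x y \<in> S"
  unfolding semigroup_on_def by blast

lemma sg_assoc: "semigroup_on S m \<Longrightarrow> x \<in> S \<Longrightarrow> y \<in> S \<Longrightarrow> z \<in> S \<Longrightarrow> m (m x y) z = m x (m y z)"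
  unfolding semigroup_on_def by blast

lemma nerve_face_in:
  assumes S: "semigroup_on S m" and xs: "xs \<in> nerve_simplices S (Suc n)" and i: "i \<le> Suc n"
  shows "nerve_face m (Suc n) i xs \<in> nerve_simplices S n"
proof -
  have len: "length xs = Suc n" and sub: "set xs \<subseteq> S" using xs unfolding nerve_simplices_def by blast+
  show ?thesis
  proof (cases "i = 0")
    case True
    have eq: "nerve_face m (Suc n) i xs = tl xs" using True by (simp add: nerve_face_def)
    have "set (tl xs) \<subseteq> set xs" by (cases xs) auto
    moreover have "length (tl xs) = n" using len by simp
    ultimately show ?thesis unfolding eq nerve_simplices_def using sub by blast
  next
    case False
    show ?thesis
    proof (cases "i = Suc n")
      case True
      have eq: "nerve_face m (Suc n) i xs = butlast xs" using True by (simp add: nerve_face_def)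
      have "set (butlast xs) \<subseteq> set xs" by (auto dest: in_set_butlastD)
      moreover have "length (butlast xs) = n" using len by simp
      ultimately show ?thesis unfolding eq nerve_simplices_def using sub by blast
    next
      case ne: False
      have il: "i - 1 < length xs" "i < length xs" using i ne False len by auto
      have "xs ! (i-1) \<in> set xs" "xs ! i \<in> set xs" using il by (simp_all only: nth_mem)
      then have "xs ! (i-1) \<in> S" "xs ! i \<in> S" using sub by (blast, blast)
      then have mS: "m (xs ! (i-1)) (xs ! i) \<in> S" by (rule sg_closed[OF S])
      have st1: "set (take (i-1) xs) \<subseteq> S" by (rule order_trans[OF set_take_subset sub])
      have st2: "set (drop (i+1) xs) \<subseteq> S" by (rule order_trans[OF set_drop_subset sub])
      note st = st1 st2
      have eq: "nerve_face m (Suc n) i xs = take (i-1) xs @ [m (xs ! (i-1)) (xs ! i)] @ drop (i+1) xs"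
        using False ne by (simp add: nerve_face_def)
      have "length (take (i-1) xs @ [m (xs ! (i-1)) (xs ! i)] @ drop (i+1) xs) = n"
        using il len False by simp
      moreover have "set (take (i-1) xs @ [m (xs ! (i-1)) (xs ! i)] @ drop (i+1) xs) \<subseteq> S"
        using st mS by (simp only: set_append set_simps) blast
      ultimately show ?thesis unfolding eq nerve_simplices_def by blast
    qed
  qed
qed

definition hom_on :: "'a set \<Rightarrow> ('a \<Rightarrow> 'a \<Rightarrow> 'a) \<Rightarrow> ('a \<Rightarrow> 'a) \<Rightarrow> bool" where
  "hom_on S m h \<longleftrightarrow> (\<forall>x\<in>S. \<forall>y\<in>S. h (m x y) = m (h x) (h y))"

lemma map_face:
  assumes h: "hom_on S m h" and xs: "xs \<in> nerve_simplices S (Suc n)" and i: "i \<le> Suc n"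
  shows "map h (nerve_face m (Suc n) i xs) = nerve_face m (Suc n) i (map h xs)"
proof -
  have len: "length xs = Suc n" and sub: "set xs \<subseteq> S" using xs by (auto simp: nerve_simplices_def)
  show ?thesis
  proof (cases "i = 0")
    case True then show ?thesis by (simp add: nerve_face_def map_tl)
  next
    case False
    show ?thesis
    proof (cases "i = Suc n")
      case True then show ?thesis using False by (simp add: nerve_face_def map_butlast)
    next
      case ne: False
      have il: "i - 1 < length xs" "i < length xs" using i ne False len by auto
      have "xs ! (i-1) \<in> set xs" "xs ! i \<in> set xs" using il by (simp_all only: nth_mem)
      then have xS: "xs ! (i-1) \<in> S" "xs ! i \<in> S" using sub by (blast, blast)
      have eq1: "nerve_face m (Suc n) i xs = take (i-1) xs @ [m (xs ! (i-1)) (xs ! i)] @ drop (i+1) xs"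
        using False ne by (simp add: nerve_face_def)
      have eq2: "nerve_face m (Suc n) i (map h xs) = take (i-1) (map h xs) @ [m (map h xs ! (i-1)) (map h xs ! i)] @ drop (i+1) (map h xs)"
        using False ne by (simp add: nerve_face_def)
      have "h (m (xs ! (i-1)) (xs ! i)) = m (map h xs ! (i-1)) (map h xs ! i)"
        using h xS il unfolding hom_on_def by (simp add: nth_map)
      then show ?thesis unfolding eq1 eq2 by (simp only: map_append take_map drop_map list.map)
    qed
  qed
qed

lemma map_in:
  assumes hT: "\<And>x. x \<in> S \<Longrightarrow> h x \<in> T" and x: "x \<in> nerve_simplices S n"
  shows "map h x \<in> nerve_simplices T n"
proof -
  have "length x = n" "set x \<subseteq> S" using x unfolding nerve_simplices_def by blast+
  moreover have "set (map h x) \<subseteq> T" using calculation(2) hT by auto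
  ultimately show ?thesis unfolding nerve_simplices_def by simp
qed

abbreviation QS where "QS S m \<equiv> realization_class (nerve_simplices S) (nerve_face m)"

definition Bmap where
  "Bmap S T m h = lift (nerve_simplices S) (nerve_face m) (\<lambda>((n,xs),t). QS T m ((n, map h xs), t))"

lemma Bmap_respects:
  assumes S: "semigroup_on S m" and h: "hom_on S m h" and hT: "\<And>x. x \<in> S \<Longrightarrow> h x \<in> T"
    and ab: "(a,b) \<in> realization_rel (nerve_simplices S) (nerve_face m)"
  shows "(\<lambda>((n,xs),t). QS T m ((n, map h xs), t)) a = (\<lambda>((n,xs),t). QS T m ((n, map h xs), t)) b"
proof -
  obtain n i x t where ab': "a = ((n, nerve_face m (Suc n) i x), t)" "b = ((Suc n, x), simplical_face i t)"
    and x: "x \<in> nerve_simplices S (Suc n)" and i: "i \<le> Suc n" and t: "t \<in> standard_simplex n"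
    using ab unfolding realization_rel_def by blast
  have hx: "map h x \<in> nerve_simplices T (Suc n)" by (rule map_in[OF hT x])
  have "(((n, nerve_face m (Suc n) i (map h x)), t), ((Suc n, map h x), simplical_face i t))
        \<in> realization_rel (nerve_simplices T) (nerve_face m)"
    unfolding realization_rel_def using hx i t by blast
  then have "QS T m ((n, map h (nerve_face m (Suc n) i x)), t) = QS T m ((Suc n, map h x), simplical_face i t)"
    unfolding map_face[OF h x i] by (rule class_eq_rel)
  then show ?thesis unfolding ab' by (simp only: prod.case)
qed

lemma cont_into_sum:
  assumes "x \<in> X n"
  shows "continuous_map (subtopology (powertop_real UNIV) (standard_simplex n)) (simplices_sum X) (\<lambda>t. ((n,x),t))"
proof -
  have "(n,x) \<in> (SIGMA n:UNIV. X n)" using assms by simp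
  from continuous_map_component_injection[OF this, of "\<lambda>(n, x). subtopology (powertop_real UNIV) (standard_simplex n)"]
  show ?thesis unfolding simplices_sum_def by simp
qed

lemma cont_from_sum:
  assumes "\<And>n x. x \<in> X n \<Longrightarrow> continuous_map (subtopology (powertop_real UNIV) (standard_simplex n)) W (\<lambda>t. h ((n,x),t))"
  shows "continuous_map (simplices_sum X) W h"
  unfolding simplices_sum_def
proof (rule continuous_map_from_sum)
  fix j assume j: "j \<in> (SIGMA n:UNIV. X n)"
  obtain n x where jj: "j = (n,x)" by (cases j)
  have "x \<in> X n" using j jj by simp
  then show "continuous_map ((\<lambda>(n, x). subtopology (powertop_real UNIV) (standard_simplex n)) j) W (\<lambda>y. h (j, y))"
    unfolding jj prod.case by (rule assms)
qed

lemma cont_from_prod_sum: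
  assumes "\<And>n x. x \<in> X n \<Longrightarrow> continuous_map (prod_topology Z (subtopology (powertop_real UNIV) (standard_simplex n))) W (\<lambda>(z,t). h (z,((n,x),t)))"
  shows "continuous_map (prod_topology Z (simplices_sum X)) W h"
  unfolding simplices_sum_def
proof (rule continuous_map_from_prod_sum)
  fix j assume j: "j \<in> (SIGMA n:UNIV. X n)"
  obtain n x where jj: "j = (n,x)" by (cases j)
  have "x \<in> X n" using j jj by simp
  then show "continuous_map (prod_topology Z ((\<lambda>(n, x). subtopology (powertop_real UNIV) (standard_simplex n)) j)) W (\<lambda>(z,y). h (z,(j, y)))"
    unfolding jj prod.case by (rule assms)
qed

lemma Bmap_cont:
  assumes S: "semigroup_on S m" and h: "hom_on S m h" and hT: "\<And>x. x \<in> S \<Longrightarrow> h x \<in> T"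
  shows "continuous_map (classifying_space S m) (classifying_space T m) (Bmap S T m h)"
  unfolding classifying_space_def Bmap_def
proof (rule continuous_lift)
  show "(\<lambda>((n,xs),t). QS T m ((n, map h xs), t)) a = (\<lambda>((n,xs),t). QS T m ((n, map h xs), t)) b"
    if "(a,b) \<in> realization_rel (nerve_simplices S) (nerve_face m)" for a b
    using Bmap_respects[OF S h hT that] .
  show "continuous_map (simplices_sum (nerve_simplices S)) (geometric_realization (nerve_simplices T) (nerve_face m))
     (\<lambda>((n,xs),t). QS T m ((n, map h xs), t))"
  proof (rule cont_from_sum)
    fix n x assume x: "x \<in> nerve_simplices S n"
    have hx: "map h x \<in> nerve_simplices T n" by (rule map_in[OF hT x])
    show "continuous_map (subtopology (powertop_real UNIV) (standard_simplex n))
      (geometric_realization (nerve_simplices T) (nerve_face m)) (\<lambda>t. (\<lambda>((n,xs),t). QS T m ((n, map h xs), t)) ((n,x),t))"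
    proof -
      have eq: "(\<lambda>t. (\<lambda>((n,xs),t). QS T m ((n, map h xs), t)) ((n,x),t)) = QS T m \<circ> (\<lambda>t. ((n, map h x), t))"
        by (rule ext) (simp only: o_def prod.case)
      show ?thesis unfolding eq
        by (rule continuous_map_compose[OF cont_into_sum[of "map h x" "nerve_simplices T" n, OF hx] quotient_imp_continuous_map[OF quotient_map_real]])
    qed
  qed
qed

lemma Bmap_class:
  assumes S: "semigroup_on S m" and h: "hom_on S m h" and hT: "\<And>x. x \<in> S \<Longrightarrow> h x \<in> T"
    and x: "x \<in> nerve_simplices S n" and t: "t \<in> standard_simplex n"
  shows "Bmap S T m h (QS S m ((n,x),t)) = QS T m ((n, map h x), t)"
proof -
  have tp: "((n,x),t) \<in> topspace (simplices_sum (nerve_simplices S))"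
    using x t by (simp add: topspace_simplices_sum)
  then have "lift (nerve_simplices S) (nerve_face m) (\<lambda>((n,xs),t). QS T m ((n, map h xs), t)) (QS S m ((n,x),t))
     = (\<lambda>((n,xs),t). QS T m ((n, map h xs), t)) ((n,x),t)"
  proof -
    have resp: "\<And>a b. (a,b) \<in> realization_rel (nerve_simplices S) (nerve_face m) \<Longrightarrow>
      (\<lambda>((n,xs),t). QS T m ((n, map h xs), t)) a = (\<lambda>((n,xs),t). QS T m ((n, map h xs), t)) b"
      using Bmap_respects[OF S h hT] by this
    show ?thesis by (rule lift_class[of "nerve_simplices S" "nerve_face m" "\<lambda>((n,xs),t). QS T m ((n, map h xs), t)", OF resp tp])
  qed
  then show ?thesis unfolding Bmap_def by (simp only: prod.case)
qed


definition cum :: "(nat \<Rightarrow> real) \<Rightarrow> nat \<Rightarrow> real" where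
  "cum t j = (\<Sum>l<j. t l)"

definition Wf :: "(nat \<Rightarrow> real) \<Rightarrow> real \<Rightarrow> nat \<Rightarrow> real" where
  "Wf t c j = max (cum t (j - 1)) (min (cum t j) c)"

definition hu :: "(nat \<Rightarrow> real) \<Rightarrow> real \<Rightarrow> nat \<Rightarrow> real" where
  "hu t c = (\<lambda>j. Wf t c (Suc j) - Wf t c j)"

definition valid :: "(nat \<Rightarrow> real) \<Rightarrow> real \<Rightarrow> nat \<Rightarrow> bool" where
  "valid t c k \<longleftrightarrow> cum t k \<le> c \<and> c \<le> cum t (Suc k)"

lemma cum_0 [simp]: "cum t 0 = 0" by (simp add: cum_def)

lemma cum_Suc: "cum t (Suc j) = cum t j + t j" by (simp add: cum_def)

lemma ss_nonneg: "t \<in> standard_simplex n \<Longrightarrow> 0 \<le> t l"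
  by (simp add: standard_simplex_def)

lemma ss_zero: "t \<in> standard_simplex n \<Longrightarrow> n < l \<Longrightarrow> t l = 0"
  by (simp add: standard_simplex_def)

lemma ss_sum: "t \<in> standard_simplex n \<Longrightarrow> cum t (Suc n) = 1"
  by (simp add: standard_simplex_def cum_def lessThan_Suc_atMost)

lemma cum_mono:
  assumes "\<And>l. 0 \<le> t l" and "a \<le> b"
  shows "cum t a \<le> cum t b"
  unfolding cum_def using assms by (intro sum_mono2) auto

lemma cum_nonneg: "(\<And>l. 0 \<le> t l) \<Longrightarrow> 0 \<le> cum t a"
  unfolding cum_def by (intro sum_nonneg) auto

lemma cum_ge:
  assumes t: "t \<in> standard_simplex n" and "Suc n \<le> j"
  shows "cum t j = 1"
  using assms(2)
proof (induction j rule: dec_induct)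
  case base then show ?case using ss_sum[OF t] .
next
  case (step j) then show ?case using ss_zero[OF t, of j] by (simp add: cum_Suc)
qed

lemma cum_le1:
  assumes t: "t \<in> standard_simplex n"
  shows "cum t j \<le> 1"
proof (cases "j \<le> Suc n")
  case True
  then have "cum t j \<le> cum t (Suc n)" by (rule cum_mono[OF ss_nonneg[OF t]])
  then show ?thesis using ss_sum[OF t] by simp
next
  case False then show ?thesis using cum_ge[OF t, of j] by simp
qed

lemma exists_valid_aux:
  assumes "\<And>l. 0 \<le> t l"
  shows "0 \<le> c \<Longrightarrow> c \<le> cum t (Suc j) \<Longrightarrow> \<exists>k\<le>j. valid t c k"
proof (induction j)
  case 0 then show ?case by (auto simp: valid_def)
next
  case (Suc j)
  show ?case
  proof (cases "c \<le> cum t (Suc j)")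
    case True
    then have "\<exists>k\<le>j. valid t c k" using Suc.IH Suc.prems(1) by simp
    then obtain k where "k \<le> j" "valid t c k" by blast
    then show ?thesis by (intro exI[of _ k]) simp
  next
    case False then show ?thesis using Suc.prems by (intro exI[of _ "Suc j"]) (auto simp: valid_def)
  qed
qed

lemma exists_valid:
  assumes t: "t \<in> standard_simplex n" and "0 \<le> c" "c \<le> 1"
  shows "\<exists>k\<le>n. valid t c k"
  using exists_valid_aux[of t c n, OF ss_nonneg[OF t]] assms ss_sum[OF t] by simp

lemma Wf_mono_step:
  assumes "\<And>l. 0 \<le> t l"
  shows "Wf t c j \<le> Wf t c (Suc j)"
proof -
  have "cum t (j - 1) \<le> cum t j" by (rule cum_mono[OF assms]) simp
  then show ?thesis unfolding Wf_def by (auto simp: max_def min_def)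
qed

lemma Wf_0: "0 \<le> c \<Longrightarrow> Wf t c 0 = 0"
  by (simp add: Wf_def)

lemma Wf_nonneg: "(\<And>l. 0 \<le> t l) \<Longrightarrow> 0 \<le> Wf t c j"
  unfolding Wf_def using cum_nonneg[of t "j - 1"] by simp

lemma Wf_le1: "t \<in> standard_simplex n \<Longrightarrow> c \<le> 1 \<Longrightarrow> Wf t c j \<le> 1"
  unfolding Wf_def using cum_le1[of t n "j - 1"] cum_le1[of t n j] by simp

lemma Wf_ge:
  assumes t: "t \<in> standard_simplex n" and "c \<le> 1" and "Suc (Suc n) \<le> j"
  shows "Wf t c j = 1"
  unfolding Wf_def using cum_ge[OF t, of "j - 1"] cum_ge[OF t, of j] assms(2,3) by simp

lemma hu_in:
  assumes t: "t \<in> standard_simplex n" and c: "0 \<le> c" "c \<le> 1"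
  shows "hu t c \<in> standard_simplex (Suc n)"
proof -
  have nn: "\<And>l. 0 \<le> t l" using ss_nonneg[OF t] .
  have a: "0 \<le> hu t c j" for j using Wf_mono_step[of t c j, OF nn] by (simp add: hu_def)
  have b: "hu t c j \<le> 1" for j
    using Wf_nonneg[of t c j, OF nn] Wf_le1[OF t c(2), of "Suc j"] by (simp add: hu_def)
  have z: "hu t c j = 0" if "Suc n < j" for j
    using Wf_ge[OF t c(2), of j] Wf_ge[OF t c(2), of "Suc j"] that by (simp add: hu_def)
  have "(\<Sum>j\<le>Suc n. hu t c j) = (\<Sum>j<Suc (Suc n). Wf t c (Suc j) - Wf t c j)"
    by (simp add: hu_def lessThan_Suc_atMost)
  also have "\<dots> = Wf t c (Suc (Suc n)) - Wf t c 0" by (rule sum_lessThan_telescope)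
  also have "\<dots> = 1" using Wf_ge[OF t c(2), of "Suc (Suc n)"] Wf_0[OF c(1)] by simp
  finally show ?thesis using a b z by (simp add: standard_simplex_def)
qed

lemma face_telescope:
  fixes A B :: "nat \<Rightarrow> real"
  assumes "\<And>j. A j = (if j \<le> a then B j else B (j - 1))"
  shows "(\<lambda>j. A (Suc j) - A j) = simplical_face a (\<lambda>j. B (Suc j) - B j)"
proof
  fix j
  show "A (Suc j) - A j = simplical_face a (\<lambda>j. B (Suc j) - B j) j"
  proof (cases "j < a")
    case True then show ?thesis using assms[of j] assms[of "Suc j"] by (simp add: simplical_face_def)
  next
    case False
    show ?thesis
    proof (cases "j = a")
      case True then show ?thesis using assms[of j] assms[of "Suc j"] by (simp add: simplical_face_def)
    next
      case ne: False
      then have "a < j" using False by simp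
      then show ?thesis using assms[of j] assms[of "Suc j"] by (simp add: simplical_face_def)
    qed
  qed
qed

lemma t_telescope: "t = (\<lambda>j. cum t (Suc j) - cum t j)"
  by (simp add: cum_Suc)

lemma hu_face:
  assumes "\<And>j. Wf t c j = (if j \<le> a then cum t j else cum t (j - 1))"
  shows "hu t c = simplical_face a t"
proof -
  have "hu t c = simplical_face a (\<lambda>j. cum t (Suc j) - cum t j)"
    unfolding hu_def by (rule face_telescope[OF assms])
  then show ?thesis using t_telescope[of t] by simp
qed

lemma hu_cut:
  assumes nn: "\<And>l. 0 \<le> t l" and c: "c = cum t (Suc k)"
  shows "hu t c = simplical_face (Suc k) t"
proof (rule hu_face)
  fix j
  show "Wf t c j = (if j \<le> Suc k then cum t j else cum t (j - 1))"
  proof (cases "j \<le> Suc k")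
    case True
    have "cum t j \<le> c" unfolding c using True by (rule cum_mono[OF nn])
    moreover have "cum t (j - 1) \<le> cum t j" by (rule cum_mono[OF nn]) simp
    ultimately show ?thesis using True unfolding Wf_def by simp
  next
    case False
    have "c \<le> cum t (j - 1)" unfolding c using False by (intro cum_mono[OF nn]) simp
    moreover have "cum t (j - 1) \<le> cum t j" by (rule cum_mono[OF nn]) simp
    ultimately show ?thesis using False unfolding Wf_def by simp
  qed
qed

lemma hu_zero:
  assumes nn: "\<And>l. 0 \<le> t l"
  shows "hu t 0 = simplical_face 0 t"
proof (rule hu_face)
  fix j
  have "0 \<le> cum t j" by (rule cum_nonneg[OF nn])
  moreover have "0 \<le> cum t (j - 1)" by (rule cum_nonneg[OF nn])
  ultimately show "Wf t 0 j = (if j \<le> 0 then cum t j else cum t (j - 1))"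
    unfolding Wf_def by auto
qed

lemma cum_face:
  "cum (simplical_face i t) j = (if j \<le> i then cum t j else cum t (j - 1))"
proof (induction j)
  case 0 then show ?case by simp
next
  case (Suc j)
  show ?case
  proof (cases "Suc j \<le> i")
    case True then show ?thesis using Suc by (simp add: cum_Suc simplical_face_def)
  next
    case False
    show ?thesis
    proof (cases "j = i")
      case True then show ?thesis using Suc by (simp add: cum_Suc simplical_face_def)
    next
      case ne: False
      then have "i < j" using False by simp
      then show ?thesis using Suc by (cases j) (auto simp: cum_Suc simplical_face_def)
    qed
  qed
qed

lemma Wf_face:
  assumes nn: "\<And>l. 0 \<le> t l" and v: "valid t c k"
    and a: "a = (if k < i then Suc i else i)"
  shows "Wf (simplical_face i t) c j = (if j \<le> a then Wf t c j else Wf t c (j - 1))"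
proof -
  have cm: "\<And>x y. x \<le> y \<Longrightarrow> cum t x \<le> cum t y" by (rule cum_mono[OF nn])
  have key: "Wf (simplical_face i t) c (Suc i) = cum t i"
    unfolding Wf_def cum_face by simp
  show ?thesis
  proof (cases "j \<le> i")
    case True
    then show ?thesis using a unfolding Wf_def cum_face by auto
  next
    case False
    show ?thesis
    proof (cases "j = Suc i")
      case True
      show ?thesis
      proof (cases "k < i")
        case kl: True
        have "c \<le> cum t i" using v cm[of "Suc k" i] kl unfolding valid_def by simp
        moreover have "cum t (Suc i - 1) = cum t i" by simp
        ultimately have "Wf t c (Suc i) = cum t i" unfolding Wf_def by simp
        then show ?thesis using key True a kl by simp
      next
        case kg: False
        have "cum t i \<le> c" using v cm[of i k] kg unfolding valid_def by simp
        moreover have "cum t (i - 1) \<le> cum t i" by (rule cm) simp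
        ultimately have "Wf t c i = cum t i" unfolding Wf_def by simp
        then show ?thesis using key True a kg by simp
      qed
    next
      case ne: False
      then have j: "Suc i < j" using False by simp
      then have "j - 1 - 1 = j - 2" "\<not> (j - 1 \<le> i)" "\<not> j \<le> i" by auto
      then have "Wf (simplical_face i t) c j = Wf t c (j - 1)"
        unfolding Wf_def cum_face by simp
      moreover have "\<not> j \<le> a" using a j by auto
      ultimately show ?thesis by simp
    qed
  qed
qed

lemma hu_face_shift:
  assumes nn: "\<And>l. 0 \<le> t l" and v: "valid t c k"
  shows "hu (simplical_face i t) c = simplical_face (if k < i then Suc i else i) (hu t c)"
  unfolding hu_def
  by (rule face_telescope) (rule Wf_face[OF nn v refl])

lemma valid_face:
  assumes v: "valid t c k"
  shows "valid (simplical_face i t) c (if k < i then k else Suc k)"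
  using v unfolding valid_def cum_face by auto


definition sig :: "'a \<Rightarrow> ('a \<Rightarrow> 'a) \<Rightarrow> ('a \<Rightarrow> 'a) \<Rightarrow> nat \<Rightarrow> 'a list \<Rightarrow> 'a list" where
  "sig e f g k xs = map f (take k xs) @ [e] @ map g (drop k xs)"

lemma sig_len: "k \<le> length xs \<Longrightarrow> length (sig e f g k xs) = Suc (length xs)"
  by (simp add: sig_def)

lemma sig_nth:
  assumes "k \<le> length xs" "p < Suc (length xs)"
  shows "sig e f g k xs ! p = (if p < k then f (xs ! p) else if p = k then e else g (xs ! (p - 1)))"
proof -
  have l: "length (map f (take k xs)) = k" using assms(1) by simp
  show ?thesis
  proof (cases "p < k")
    case True then show ?thesis unfolding sig_def using l assms by (simp add: nth_append)
  next
    case False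
    show ?thesis
    proof (cases "p = k")
      case True then show ?thesis unfolding sig_def using l assms by (simp add: nth_append)
    next
      case ne: False
      then have "k < p" using False by simp
      then have "p - k = Suc (p - Suc k)" "k + (p - Suc k) = p - 1" by auto
      then show ?thesis unfolding sig_def using l assms False ne by (simp add: nth_append)
    qed
  qed
qed

lemma face_len:
  assumes "length L = N" "0 < N" "j \<le> N"
  shows "length (nerve_face m N j L) = N - 1"
  using assms by (auto simp: nerve_face_def)

lemma face_nth:
  assumes "length L = N" "0 < N" "j \<le> N" "p < N - 1"
  shows "nerve_face m N j L ! p =
    (if p < j - 1 then L ! p else if p = j - 1 \<and> 0 < j \<and> j < N then m (L ! (j - 1)) (L ! j) else L ! (p + 1))"
proof (cases "j = 0")
  case True then show ?thesis using assms by (simp add: nerve_face_def nth_tl)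
next
  case False
  show ?thesis
  proof (cases "j = N")
    case True then show ?thesis using assms False by (simp add: nerve_face_def nth_butlast)
  next
    case ne: False
    have eq: "nerve_face m N j L = take (j - 1) L @ [m (L ! (j - 1)) (L ! j)] @ drop (j + 1) L"
      using False ne by (simp add: nerve_face_def)
    have l: "length (take (j - 1) L) = j - 1" using assms by simp
    show ?thesis
    proof (cases "p < j - 1")
      case True then show ?thesis unfolding eq using l by (simp add: nth_append)
    next
      case False2: False
      show ?thesis
      proof (cases "p = j - 1")
        case True then show ?thesis unfolding eq using l False ne assms by (simp add: nth_append)
      next
        case False3: False
        then have "j - 1 < p" using False2 by simp
        then have "p - (j - 1) = Suc (p - j)" "j + 1 + (p - j) = p + 1" using False by auto
        then show ?thesis unfolding eq using l False2 False3 assms by (simp add: nth_append)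
      qed
    qed
  qed
qed

lemma sig_adjacent:
  assumes len: "length xs = n" and k: "k < n"
    and fg: "m (f (xs ! k)) e = m e (g (xs ! k))"
  shows "nerve_face m (Suc n) (Suc k) (sig e f g k xs) = nerve_face m (Suc n) (Suc k) (sig e f g (Suc k) xs)"
proof (rule nth_equalityI)
  show "length (nerve_face m (Suc n) (Suc k) (sig e f g k xs)) = length (nerve_face m (Suc n) (Suc k) (sig e f g (Suc k) xs))"
    using len k by (simp add: face_len sig_len)
  fix p assume "p < length (nerve_face m (Suc n) (Suc k) (sig e f g k xs))"
  then have p: "p < n" using len k by (simp add: face_len sig_len)
  have A: "nerve_face m (Suc n) (Suc k) (sig e f g k xs) ! p =
    (if p < k then sig e f g k xs ! p else if p = k then m (sig e f g k xs ! k) (sig e f g k xs ! Suc k) else sig e f g k xs ! (p + 1))"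
    using face_nth[of "sig e f g k xs" "Suc n" "Suc k" p m] len k p by (simp add: sig_len)
  have B: "nerve_face m (Suc n) (Suc k) (sig e f g (Suc k) xs) ! p =
    (if p < k then sig e f g (Suc k) xs ! p else if p = k then m (sig e f g (Suc k) xs ! k) (sig e f g (Suc k) xs ! Suc k) else sig e f g (Suc k) xs ! (p + 1))"
    using face_nth[of "sig e f g (Suc k) xs" "Suc n" "Suc k" p m] len k p by (simp add: sig_len)
  show "nerve_face m (Suc n) (Suc k) (sig e f g k xs) ! p = nerve_face m (Suc n) (Suc k) (sig e f g (Suc k) xs) ! p"
    unfolding A B using len k p fg by (simp add: sig_nth)
qed

lemma sig_caseA:
  assumes len: "length xs = Suc n" and ki: "k < i" and i: "i \<le> Suc n"
    and hom: "\<And>a b. a \<in> set xs \<Longrightarrow> b \<in> set xs \<Longrightarrow> g (m a b) = m (g a) (g b)"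
  shows "nerve_face m (Suc (Suc n)) (Suc i) (sig e f g k xs) = sig e f g k (nerve_face m (Suc n) i xs)"
proof (rule nth_equalityI)
  have lf: "length (nerve_face m (Suc n) i xs) = n" using face_len[OF len] i by simp
  show "length (nerve_face m (Suc (Suc n)) (Suc i) (sig e f g k xs)) = length (sig e f g k (nerve_face m (Suc n) i xs))"
    using len ki i lf by (simp add: face_len sig_len)
  fix p assume "p < length (nerve_face m (Suc (Suc n)) (Suc i) (sig e f g k xs))"
  then have p: "p < Suc n" using len ki i by (simp add: face_len sig_len)
  have A: "nerve_face m (Suc (Suc n)) (Suc i) (sig e f g k xs) ! p =
    (if p < i then sig e f g k xs ! p else if p = i \<and> i < Suc n then m (sig e f g k xs ! i) (sig e f g k xs ! Suc i) else sig e f g k xs ! (p + 1))"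
    using face_nth[of "sig e f g k xs" "Suc (Suc n)" "Suc i" p m] len ki i p by (simp add: sig_len)
  have B: "sig e f g k (nerve_face m (Suc n) i xs) ! p =
     (if p < k then f (nerve_face m (Suc n) i xs ! p) else if p = k then e else g (nerve_face m (Suc n) i xs ! (p - 1)))"
    using sig_nth[of k "nerve_face m (Suc n) i xs" p e f g] lf ki i p by simp
  have C: "\<And>q. q < n \<Longrightarrow> nerve_face m (Suc n) i xs ! q =
    (if q < i - 1 then xs ! q else if q = i - 1 \<and> 0 < i \<and> i < Suc n then m (xs ! (i - 1)) (xs ! i) else xs ! (q + 1))"
    using face_nth[OF len] i by simp
  have D: "\<And>q. q < Suc (Suc n) \<Longrightarrow> sig e f g k xs ! q = (if q < k then f (xs ! q) else if q = k then e else g (xs ! (q - 1)))"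
    using sig_nth[of k xs _ e f g] len ki i by simp
  show "nerve_face m (Suc (Suc n)) (Suc i) (sig e f g k xs) ! p = sig e f g k (nerve_face m (Suc n) i xs) ! p"
  proof (cases "p < k")
    case True
    have pi: "p < i - 1" "p < n" "p < i" using True ki i by auto
    have "nerve_face m (Suc n) i xs ! p = xs ! p" using C[of p] pi by simp
    then show ?thesis unfolding A B using D[of p] p pi True by simp
  next
    case F1: False
    show ?thesis
    proof (cases "p = k")
      case True then show ?thesis unfolding A B using D p ki i by simp
    next
      case F2: False
      then have pk: "k < p" using F1 by simp
      have "nerve_face m (Suc n) i xs ! (p - 1) =
        (if p - 1 < i - 1 then xs ! (p - 1) else if p - 1 = i - 1 \<and> 0 < i \<and> i < Suc n then m (xs ! (i - 1)) (xs ! i) else xs ! p)"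
        using C[of "p - 1"] pk p by simp
      moreover have "i - 1 < Suc n" "i < Suc n \<Longrightarrow> xs ! (i - 1) \<in> set xs" "i < Suc n \<Longrightarrow> xs ! i \<in> set xs"
        using i len by auto
      ultimately show ?thesis unfolding A B using D p pk ki i hom by auto
    qed
  qed
qed

lemma sig_caseB:
  assumes len: "length xs = Suc n" and ik: "i \<le> k" and k: "k \<le> n"
    and hom: "\<And>a b. a \<in> set xs \<Longrightarrow> b \<in> set xs \<Longrightarrow> f (m a b) = m (f a) (f b)"
  shows "nerve_face m (Suc (Suc n)) i (sig e f g (Suc k) xs) = sig e f g k (nerve_face m (Suc n) i xs)"
proof (rule nth_equalityI)
  have i: "i \<le> Suc n" using ik k by simp
  have lf: "length (nerve_face m (Suc n) i xs) = n" using face_len[OF len] i by simp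
  show "length (nerve_face m (Suc (Suc n)) i (sig e f g (Suc k) xs)) = length (sig e f g k (nerve_face m (Suc n) i xs))"
    using len ik k lf by (simp add: face_len sig_len)
  fix p assume "p < length (nerve_face m (Suc (Suc n)) i (sig e f g (Suc k) xs))"
  then have p: "p < Suc n" using len ik k by (simp add: face_len sig_len)
  have A: "nerve_face m (Suc (Suc n)) i (sig e f g (Suc k) xs) ! p =
    (if p < i - 1 then sig e f g (Suc k) xs ! p else if p = i - 1 \<and> 0 < i then m (sig e f g (Suc k) xs ! (i - 1)) (sig e f g (Suc k) xs ! i) else sig e f g (Suc k) xs ! (p + 1))"
    using face_nth[of "sig e f g (Suc k) xs" "Suc (Suc n)" i p m] len ik k p by (simp add: sig_len)
  have B: "sig e f g k (nerve_face m (Suc n) i xs) ! p =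
     (if p < k then f (nerve_face m (Suc n) i xs ! p) else if p = k then e else g (nerve_face m (Suc n) i xs ! (p - 1)))"
    using sig_nth[of k "nerve_face m (Suc n) i xs" p e f g] lf k p by simp
  have C: "\<And>q. q < n \<Longrightarrow> nerve_face m (Suc n) i xs ! q =
    (if q < i - 1 then xs ! q else if q = i - 1 \<and> 0 < i \<and> i < Suc n then m (xs ! (i - 1)) (xs ! i) else xs ! (q + 1))"
    using face_nth[OF len] i by simp
  have D: "\<And>q. q < Suc (Suc n) \<Longrightarrow> sig e f g (Suc k) xs ! q = (if q < Suc k then f (xs ! q) else if q = Suc k then e else g (xs ! (q - 1)))"
    using sig_nth[of "Suc k" xs _ e f g] len k by simp
  have mem: "0 < i \<Longrightarrow> xs ! (i - 1) \<in> set xs" "0 < i \<Longrightarrow> xs ! i \<in> set xs"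
    using ik k len by auto
  show "nerve_face m (Suc (Suc n)) i (sig e f g (Suc k) xs) ! p = sig e f g k (nerve_face m (Suc n) i xs) ! p"
  proof (cases "p < k")
    case True
    then have "nerve_face m (Suc n) i xs ! p =
      (if p < i - 1 then xs ! p else if p = i - 1 \<and> 0 < i then m (xs ! (i - 1)) (xs ! i) else xs ! (p + 1))"
      using C[of p] k ik by auto
    then show ?thesis unfolding A B using D p True ik k hom mem by auto
  next
    case F1: False
    show ?thesis
    proof (cases "p = k")
      case True then show ?thesis unfolding A B using D p ik k by auto
    next
      case F2: False
      then have pk: "k < p" using F1 by simp
      have "nerve_face m (Suc n) i xs ! (p - 1) = xs ! p"
        using C[of "p - 1"] pk p ik by auto
      then show ?thesis unfolding A B using D p pk ik k by auto
    qed
  qed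
qed

lemma sig_end1:
  assumes "length xs = n"
  shows "nerve_face m (Suc n) (Suc n) (sig e f g n xs) = map f xs"
  using assms by (simp add: nerve_face_def sig_def)

lemma sig_end0:
  "nerve_face m (Suc n) 0 (sig e f g 0 xs) = map g xs"
  by (simp add: nerve_face_def sig_def)

lemma sig_in:
  assumes xs: "xs \<in> nerve_simplices S n" and k: "k \<le> n" and e: "e \<in> S"
    and f: "\<And>x. x \<in> S \<Longrightarrow> f x \<in> S" and g: "\<And>x. x \<in> S \<Longrightarrow> g x \<in> S"
  shows "sig e f g k xs \<in> nerve_simplices S (Suc n)"
proof -
  have len: "length xs = n" and sub: "set xs \<subseteq> S" using xs unfolding nerve_simplices_def by blast+
  have s1: "set (take k xs) \<subseteq> S" by (rule order_trans[OF set_take_subset sub])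
  have s2: "set (drop k xs) \<subseteq> S" by (rule order_trans[OF set_drop_subset sub])
  have "set (map f (take k xs)) \<subseteq> S" using s1 f by auto
  moreover have "set (map g (drop k xs)) \<subseteq> S" using s2 g by auto
  ultimately have "set (sig e f g k xs) \<subseteq> S" using e unfolding sig_def by simp
  moreover have "length (sig e f g k xs) = Suc n" using len k by (simp add: sig_len)
  ultimately show ?thesis unfolding nerve_simplices_def by simp
qed


definition Kc :: "(nat \<Rightarrow> real) \<Rightarrow> real \<Rightarrow> nat \<Rightarrow> nat" where
  "Kc t c n = (SOME k. k \<le> n \<and> valid t c k)"

lemma Kc:
  assumes "t \<in> standard_simplex n" "0 \<le> c" "c \<le> 1"
  shows "Kc t c n \<le> n \<and> valid t c (Kc t c n)"
  unfolding Kc_def using exists_valid[OF assms] by (rule someI_ex)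

definition H0 where
  "H0 S m e f g = (\<lambda>(s::real, ((n::nat, xs), t)). QS S m ((Suc n, sig e f g (Kc t (1 - s) n) xs), hu t (1 - s)))"

definition good where
  "good S m e f g \<longleftrightarrow> semigroup_on S m \<and> e \<in> S \<and> (\<forall>x\<in>S. f x \<in> S) \<and> (\<forall>x\<in>S. g x \<in> S) \<and>
     hom_on S m f \<and> hom_on S m g \<and> (\<forall>a\<in>S. m (f a) e = m e (g a))"

lemma rel_intro:
  assumes "x \<in> X (Suc n)" "i \<le> Suc n" "t \<in> standard_simplex n"
  shows "(((n, d (Suc n) i x), t), ((Suc n, x), simplical_face i t)) \<in> realization_rel X d"
  unfolding realization_rel_def using assms by blast

lemma val_adj:
  assumes G: "good S m e f g" and xs: "xs \<in> nerve_simplices S n" and t: "t \<in> standard_simplex n"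
    and v1: "valid t c k" and v2: "valid t c (Suc k)" and kn: "Suc k \<le> n"
  shows "QS S m ((Suc n, sig e f g k xs), hu t c) = QS S m ((Suc n, sig e f g (Suc k) xs), hu t c)"
proof -
  have e: "e \<in> S" and fS: "\<And>x. x \<in> S \<Longrightarrow> f x \<in> S" and gS: "\<And>x. x \<in> S \<Longrightarrow> g x \<in> S"
    and fg: "\<And>a. a \<in> S \<Longrightarrow> m (f a) e = m e (g a)"
    using G unfolding good_def by blast+
  have len: "length xs = n" and sub: "set xs \<subseteq> S" using xs unfolding nerve_simplices_def by blast+
  have c: "c = cum t (Suc k)" using v1 v2 unfolding valid_def by simp
  have hu: "hu t c = simplical_face (Suc k) t" by (rule hu_cut[OF ss_nonneg[OF t] c])
  have xk: "xs ! k \<in> S" using len kn sub by (simp add: subset_iff)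
  have s1: "sig e f g k xs \<in> nerve_simplices S (Suc n)" by (rule sig_in[OF xs _ e fS gS]) (use kn in simp)
  have s2: "sig e f g (Suc k) xs \<in> nerve_simplices S (Suc n)" by (rule sig_in[OF xs kn e fS gS])
  have eq: "nerve_face m (Suc n) (Suc k) (sig e f g k xs) = nerve_face m (Suc n) (Suc k) (sig e f g (Suc k) xs)"
    by (rule sig_adjacent[OF len]) (use kn fg[OF xk] in simp_all)
  have r1: "QS S m ((n, nerve_face m (Suc n) (Suc k) (sig e f g k xs)), t) = QS S m ((Suc n, sig e f g k xs), simplical_face (Suc k) t)"
    by (rule class_eq_rel[OF rel_intro[where X="nerve_simplices S" and d="nerve_face m" and n=n, OF s1 _ t]]) (use kn in simp)
  have r2: "QS S m ((n, nerve_face m (Suc n) (Suc k) (sig e f g (Suc k) xs)), t) = QS S m ((Suc n, sig e f g (Suc k) xs), simplical_face (Suc k) t)"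
    by (rule class_eq_rel[OF rel_intro[where X="nerve_simplices S" and d="nerve_face m" and n=n, OF s2 _ t]]) (use kn in simp)
  show ?thesis unfolding hu using r1 r2 eq by simp
qed

lemma val_any_aux:
  assumes G: "good S m e f g" and xs: "xs \<in> nerve_simplices S n" and t: "t \<in> standard_simplex n"
  shows "k + d \<le> n \<Longrightarrow> valid t c k \<Longrightarrow> valid t c (k + d) \<Longrightarrow>
     QS S m ((Suc n, sig e f g k xs), hu t c) = QS S m ((Suc n, sig e f g (k + d) xs), hu t c)"
proof (induction d arbitrary: k)
  case 0 then show ?case by simp
next
  case (Suc d)
  have nn: "\<And>l. 0 \<le> t l" by (rule ss_nonneg[OF t])
  have "cum t (Suc k) \<le> cum t (k + Suc d)" by (rule cum_mono[OF nn]) simp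
  then have "cum t (Suc k) \<le> c" using Suc.prems(3) unfolding valid_def by simp
  moreover have "c \<le> cum t (Suc k)" using Suc.prems(2) unfolding valid_def by simp
  moreover have "cum t (Suc k) \<le> cum t (Suc (Suc k))" by (rule cum_mono[OF nn]) simp
  ultimately have vs: "valid t c (Suc k)" unfolding valid_def by simp
  have "QS S m ((Suc n, sig e f g k xs), hu t c) = QS S m ((Suc n, sig e f g (Suc k) xs), hu t c)"
    by (rule val_adj[OF G xs t Suc.prems(2) vs]) (use Suc.prems(1) in simp)
  also have "\<dots> = QS S m ((Suc n, sig e f g (Suc k + d) xs), hu t c)"
    by (rule Suc.IH) (use Suc.prems vs in simp_all)
  finally show ?case by simp
qed

lemma val_any:
  assumes G: "good S m e f g" and xs: "xs \<in> nerve_simplices S n" and t: "t \<in> standard_simplex n"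
    and k1: "k1 \<le> n" "valid t c k1" and k2: "k2 \<le> n" "valid t c k2"
  shows "QS S m ((Suc n, sig e f g k1 xs), hu t c) = QS S m ((Suc n, sig e f g k2 xs), hu t c)"
proof (cases "k1 \<le> k2")
  case True
  then have "k2 = k1 + (k2 - k1)" by simp
  then show ?thesis using val_any_aux[OF G xs t, of k1 "k2 - k1" c] k1 k2 by simp
next
  case False
  then have "k1 = k2 + (k1 - k2)" by simp
  then show ?thesis using val_any_aux[OF G xs t, of k2 "k1 - k2" c] k1 k2 by simp
qed

lemma H0_eq:
  assumes G: "good S m e f g" and xs: "xs \<in> nerve_simplices S n" and t: "t \<in> standard_simplex n"
    and s: "0 \<le> s" "s \<le> 1" and k: "k \<le> n" "valid t (1 - s) k"
  shows "H0 S m e f g (s, ((n, xs), t)) = QS S m ((Suc n, sig e f g k xs), hu t (1 - s))"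
proof -
  have K: "Kc t (1 - s) n \<le> n \<and> valid t (1 - s) (Kc t (1 - s) n)" by (rule Kc[OF t]) (use s in simp_all)
  show ?thesis unfolding H0_def using val_any[OF G xs t _ _ k] K by simp
qed

lemma H0_respects:
  assumes G: "good S m e f g" and s: "0 \<le> s" "s \<le> 1"
    and ab: "(a, b) \<in> realization_rel (nerve_simplices S) (nerve_face m)"
  shows "H0 S m e f g (s, a) = H0 S m e f g (s, b)"
proof -
  have Ssg: "semigroup_on S m" and e: "e \<in> S" and fS: "\<And>x. x \<in> S \<Longrightarrow> f x \<in> S" and gS: "\<And>x. x \<in> S \<Longrightarrow> g x \<in> S"
    and fh: "hom_on S m f" and gh: "hom_on S m g"
    using G unfolding good_def by blast+
  obtain n i x t where ab': "a = ((n, nerve_face m (Suc n) i x), t)" "b = ((Suc n, x), simplical_face i t)"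
    and x: "x \<in> nerve_simplices S (Suc n)" and i: "i \<le> Suc n" and t: "t \<in> standard_simplex n"
    using ab unfolding realization_rel_def by blast
  have len: "length x = Suc n" and sub: "set x \<subseteq> S" using x unfolding nerve_simplices_def by blast+
  define c where "c = 1 - s"
  have c: "0 \<le> c" "c \<le> 1" using s unfolding c_def by simp_all
  define k where "k = Kc t c n"
  have k: "k \<le> n" "valid t c k" using Kc[OF t c] unfolding k_def by simp_all
  have dx: "nerve_face m (Suc n) i x \<in> nerve_simplices S n" by (rule nerve_face_in[OF Ssg x i])
  have Ha: "H0 S m e f g (s, a) = QS S m ((Suc n, sig e f g k (nerve_face m (Suc n) i x)), hu t c)"
    unfolding ab'(1) c_def by (rule H0_eq[OF G dx t s]) (use k c_def in simp_all)
  have t': "simplical_face i t \<in> standard_simplex (Suc n)"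
    using simplical_face_in_standard_simplex[of "Suc n" i t] i t by simp
  define k' where "k' = (if k < i then k else Suc k)"
  have k': "k' \<le> Suc n" "valid (simplical_face i t) c k'"
    using k valid_face[OF k(2), of i] unfolding k'_def by auto
  have Hb: "H0 S m e f g (s, b) = QS S m ((Suc (Suc n), sig e f g k' x), hu (simplical_face i t) c)"
    unfolding ab'(2) c_def by (rule H0_eq[OF G x t' s]) (use k' c_def in simp_all)
  have hu': "hu (simplical_face i t) c = simplical_face (if k < i then Suc i else i) (hu t c)"
    by (rule hu_face_shift[OF ss_nonneg[OF t] k(2)])
  have hut: "hu t c \<in> standard_simplex (Suc n)" by (rule hu_in[OF t c])
  have sx: "sig e f g k' x \<in> nerve_simplices S (Suc (Suc n))" by (rule sig_in[OF x k'(1) e fS gS])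
  have memS: "\<And>a. a \<in> set x \<Longrightarrow> a \<in> S" using sub by blast
  show ?thesis
  proof (cases "k < i")
    case True
    have kk: "k' = k" using True unfolding k'_def by simp
    have eq: "nerve_face m (Suc (Suc n)) (Suc i) (sig e f g k x) = sig e f g k (nerve_face m (Suc n) i x)"
      by (rule sig_caseA[OF len True i]) (use gh memS in \<open>simp add: hom_on_def\<close>)
    have "QS S m ((Suc n, nerve_face m (Suc (Suc n)) (Suc i) (sig e f g k x)), hu t c) =
          QS S m ((Suc (Suc n), sig e f g k x), simplical_face (Suc i) (hu t c))"
      by (rule class_eq_rel[OF rel_intro[where X="nerve_simplices S" and d="nerve_face m" and n="Suc n", OF sx[unfolded kk] _ hut]]) (use i in simp)
    then show ?thesis unfolding Ha Hb hu' kk eq using True by simp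
  next
    case False
    have kk: "k' = Suc k" using False unfolding k'_def by simp
    have ik: "i \<le> k" using False by simp
    have eq: "nerve_face m (Suc (Suc n)) i (sig e f g (Suc k) x) = sig e f g k (nerve_face m (Suc n) i x)"
      by (rule sig_caseB[OF len ik k(1)]) (use fh memS in \<open>simp add: hom_on_def\<close>)
    have "QS S m ((Suc n, nerve_face m (Suc (Suc n)) i (sig e f g (Suc k) x)), hu t c) =
          QS S m ((Suc (Suc n), sig e f g (Suc k) x), simplical_face i (hu t c))"
      by (rule class_eq_rel[OF rel_intro[where X="nerve_simplices S" and d="nerve_face m" and n="Suc n", OF sx[unfolded kk] _ hut]]) (use i in simp)
    then show ?thesis unfolding Ha Hb hu' kk eq using False by simp
  qed
qed


lemma proj_cont:
  "continuous_map (prod_topology Z (subtopology (powertop_real UNIV) A)) euclideanreal (\<lambda>x. snd x l)"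
proof -
  have "continuous_map (subtopology (powertop_real UNIV) A) euclideanreal (\<lambda>t. t l)"
    by (rule continuous_map_from_subtopology) (rule continuous_map_product_projection, simp)
  from continuous_map_compose[OF continuous_map_snd this] show ?thesis by (simp add: o_def)
qed

lemma fst_cont:
  "continuous_map (prod_topology (subtopology euclideanreal U) Y) euclideanreal fst"
  using continuous_map_fst[of "subtopology euclideanreal U" Y] continuous_map_in_subtopology by blast

lemma cum_cont:
  "continuous_map (prod_topology Z (subtopology (powertop_real UNIV) A)) euclideanreal (\<lambda>x. cum (snd x) j)"
  unfolding cum_def by (rule continuous_map_sum) (simp_all add: proj_cont)

lemma Wf_cont:
  "continuous_map (prod_topology (subtopology euclideanreal U) (subtopology (powertop_real UNIV) A)) euclideanreal
     (\<lambda>x. Wf (snd x) (1 - fst x) j)"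
  unfolding Wf_def
  by (intro continuous_map_real_max continuous_map_real_min cum_cont continuous_map_diff continuous_map_const[THEN iffD2] fst_cont) simp

lemma hu_cont:
  "continuous_map (prod_topology (subtopology euclideanreal {0..1}) (subtopology (powertop_real UNIV) (standard_simplex n)))
     (subtopology (powertop_real UNIV) (standard_simplex (Suc n))) (\<lambda>x. hu (snd x) (1 - fst x))"
  unfolding continuous_map_in_subtopology
proof
  show "continuous_map (prod_topology (subtopology euclideanreal {0..1}) (subtopology (powertop_real UNIV) (standard_simplex n)))
     (powertop_real UNIV) (\<lambda>x. hu (snd x) (1 - fst x))"
    unfolding continuous_map_componentwise_UNIV hu_def
    by (intro allI continuous_map_diff Wf_cont)
  show "(\<lambda>x. hu (snd x) (1 - fst x)) \<in> topspace (prod_topology (subtopology euclideanreal {0..1}) (subtopology (powertop_real UNIV) (standard_simplex n))) \<rightarrow> standard_simplex (Suc n)"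
  proof
    fix x assume "x \<in> topspace (prod_topology (subtopology euclideanreal {0..1}) (subtopology (powertop_real UNIV) (standard_simplex n)))"
    then have "snd x \<in> standard_simplex n" "0 \<le> 1 - fst x" "1 - fst x \<le> 1" by (auto simp: mem_Times_iff)
    then show "hu (snd x) (1 - fst x) \<in> standard_simplex (Suc n)" by (rule hu_in)
  qed
qed

lemma closed_le0: "closedin euclideanreal {..0}"
  using closed_atMost[of "0::real"] closed_closedin by blast

lemma H0_cont_comp:
  assumes G: "good S m e f g" and xs: "xs \<in> nerve_simplices S n"
  shows "continuous_map (prod_topology (subtopology euclideanreal {0..1}) (subtopology (powertop_real UNIV) (standard_simplex n)))
     (classifying_space S m) (\<lambda>(s,t). H0 S m e f g (s, ((n,xs),t)))"
proof -
  let ?X = "prod_topology (subtopology euclideanreal {0..1}) (subtopology (powertop_real UNIV) (standard_simplex n))"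
  have e: "e \<in> S" and fS: "\<And>x. x \<in> S \<Longrightarrow> f x \<in> S" and gS: "\<And>x. x \<in> S \<Longrightarrow> g x \<in> S"
    using G unfolding good_def by blast+
  have tsX: "x \<in> topspace ?X \<longleftrightarrow> 0 \<le> fst x \<and> fst x \<le> 1 \<and> snd x \<in> standard_simplex n" for x
    by (cases x) auto
  define T where "T k = {x \<in> topspace ?X. valid (snd x) (1 - fst x) k}" for k
  define fk where "fk k = (\<lambda>x. QS S m ((Suc n, sig e f g k xs), hu (snd x) (1 - fst x)))" for k
  have fk_cont: "continuous_map ?X (classifying_space S m) (fk k)" if k: "k \<in> {..n}" for k
  proof -
    have sk: "sig e f g k xs \<in> nerve_simplices S (Suc n)" by (rule sig_in[OF xs _ e fS gS]) (use k in simp)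
    have c1: "continuous_map (subtopology (powertop_real UNIV) (standard_simplex (Suc n))) (simplices_sum (nerve_simplices S))
       (\<lambda>t. ((Suc n, sig e f g k xs), t))" by (rule cont_into_sum[of _ "nerve_simplices S" "Suc n", OF sk])
    have c2: "continuous_map (simplices_sum (nerve_simplices S)) (classifying_space S m) (QS S m)"
      unfolding classifying_space_def by (rule quotient_imp_continuous_map[OF quotient_map_real])
    have "continuous_map ?X (classifying_space S m) (QS S m \<circ> (\<lambda>t. ((Suc n, sig e f g k xs), t)) \<circ> (\<lambda>x. hu (snd x) (1 - fst x)))"
      by (rule continuous_map_compose[OF hu_cont continuous_map_compose[OF c1 c2]])
    then show ?thesis unfolding fk_def by (simp add: o_def)
  qed
  have T_closed: "closedin ?X (T k)" for k
  proof -
    have c1: "continuous_map ?X euclideanreal (\<lambda>x. cum (snd x) k - (1 - fst x))"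
      by (intro continuous_map_diff cum_cont continuous_map_const[THEN iffD2] fst_cont) simp
    have c2: "continuous_map ?X euclideanreal (\<lambda>x. (1 - fst x) - cum (snd x) (Suc k))"
      by (intro continuous_map_diff cum_cont continuous_map_const[THEN iffD2] fst_cont) simp
    have "T k = {x \<in> topspace ?X. cum (snd x) k - (1 - fst x) \<in> {..0}} \<inter> {x \<in> topspace ?X. (1 - fst x) - cum (snd x) (Suc k) \<in> {..0}}"
      unfolding T_def valid_def by auto
    then show ?thesis
      using closedin_Int[OF closedin_continuous_map_preimage[OF c1 closed_le0] closedin_continuous_map_preimage[OF c2 closed_le0]]
      by simp
  qed
  have cover: "topspace ?X \<subseteq> \<Union> (T ` {..n})"
  proof
    fix x assume x: "x \<in> topspace ?X"
    then have "snd x \<in> standard_simplex n" "0 \<le> 1 - fst x" "1 - fst x \<le> 1" using tsX by auto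
    then obtain k where "k \<le> n" "valid (snd x) (1 - fst x) k" using exists_valid by blast
    then show "x \<in> \<Union> (T ` {..n})" using x unfolding T_def by auto
  qed
  have agree: "fk i x = fk j x" if "i \<in> {..n}" "j \<in> {..n}" "x \<in> topspace ?X \<inter> T i \<inter> T j" for i j x
  proof -
    have x: "snd x \<in> standard_simplex n" using that tsX by auto
    show ?thesis unfolding fk_def
      by (rule val_any[OF G xs x]) (use that in \<open>auto simp: T_def\<close>)
  qed
  have fin: "finite {..n}" by simp
  have T_closed': "\<And>k. k \<in> {..n} \<Longrightarrow> closedin ?X (T k)" by (rule T_closed)
  have fk_cont': "\<And>k. k \<in> {..n} \<Longrightarrow> continuous_map (subtopology ?X (T k)) (classifying_space S m) (fk k)"
    by (rule continuous_map_from_subtopology[OF fk_cont])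
  have "\<exists>gg. continuous_map ?X (classifying_space S m) gg \<and>
    (\<forall>x i. i \<in> {..n} \<longrightarrow> x \<in> topspace ?X \<inter> T i \<longrightarrow> gg x = fk i x)"
  proof (rule pasting_lemma_exists_closed[OF fin cover T_closed' fk_cont' agree])
    fix g assume a: "continuous_map ?X (classifying_space S m) g"
      and b: "\<And>x i. i \<in> {..n} \<Longrightarrow> x \<in> topspace ?X \<inter> T i \<Longrightarrow> g x = fk i x"
    show "\<exists>gg. continuous_map ?X (classifying_space S m) gg \<and>
      (\<forall>x i. i \<in> {..n} \<longrightarrow> x \<in> topspace ?X \<inter> T i \<longrightarrow> gg x = fk i x)"
    proof (intro exI[of _ g] conjI allI impI)
      show "continuous_map ?X (classifying_space S m) g" by (rule a)
      fix x i assume "i \<in> {..n}" "x \<in> topspace ?X \<inter> T i"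
      then show "g x = fk i x" by (rule b)
    qed
  qed
  then obtain gg where gg: "continuous_map ?X (classifying_space S m) gg"
    "\<And>x i. i \<in> {..n} \<Longrightarrow> x \<in> topspace ?X \<inter> T i \<Longrightarrow> gg x = fk i x"
    by blast
  show ?thesis
  proof (rule continuous_map_eq[OF gg(1)])
    fix x assume x: "x \<in> topspace ?X"
    then have xx: "snd x \<in> standard_simplex n" "0 \<le> fst x" "fst x \<le> 1" using tsX by auto
    then have "0 \<le> 1 - fst x" "1 - fst x \<le> 1" by simp_all
    define K where "K = Kc (snd x) (1 - fst x) n"
    have K: "K \<le> n" "valid (snd x) (1 - fst x) K" using Kc[OF xx(1) \<open>0 \<le> 1 - fst x\<close> \<open>1 - fst x \<le> 1\<close>] unfolding K_def by simp_all
    have "gg x = fk K x" using gg(2)[of K x] K x unfolding T_def by simp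
    also have "\<dots> = H0 S m e f g (fst x, ((n, xs), snd x))"
      unfolding fk_def by (rule H0_eq[OF G xs xx(1) xx(2) xx(3) K, symmetric])
    finally show "gg x = (\<lambda>(s,t). H0 S m e f g (s, ((n,xs),t))) x" by (cases x) simp
  qed
qed


definition HH where
  "HH S m e f g = (\<lambda>(s, c). lift (nerve_simplices S) (nerve_face m) (\<lambda>p. H0 S m e f g (s, p)) c)"

lemma H0_cont:
  assumes G: "good S m e f g"
  shows "continuous_map (prod_topology (subtopology euclideanreal {0..1}) (simplices_sum (nerve_simplices S)))
     (classifying_space S m) (H0 S m e f g)"
proof (rule cont_from_prod_sum)
  fix n x assume x: "x \<in> nerve_simplices S n"
  show "continuous_map (prod_topology (subtopology euclideanreal {0..1}) (subtopology (powertop_real UNIV) (standard_simplex n)))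
     (classifying_space S m) (\<lambda>(z, t). H0 S m e f g (z, ((n, x), t)))"
    by (rule H0_cont_comp[OF G x])
qed

lemma HH_class:
  assumes G: "good S m e f g" and s: "0 \<le> s" "s \<le> 1" and p: "p \<in> topspace (simplices_sum (nerve_simplices S))"
  shows "HH S m e f g (s, QS S m p) = H0 S m e f g (s, p)"
proof -
  have resp: "\<And>a b. (a, b) \<in> realization_rel (nerve_simplices S) (nerve_face m) \<Longrightarrow>
     (\<lambda>p. H0 S m e f g (s, p)) a = (\<lambda>p. H0 S m e f g (s, p)) b"
    using H0_respects[OF G s] by this
  have "lift (nerve_simplices S) (nerve_face m) (\<lambda>p. H0 S m e f g (s, p)) (QS S m p) = (\<lambda>p. H0 S m e f g (s, p)) p"
    by (rule lift_class[of "nerve_simplices S" "nerve_face m" "\<lambda>p. H0 S m e f g (s, p)", OF resp p])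
  then show ?thesis unfolding HH_def by simp
qed

lemma HH_cont:
  assumes G: "good S m e f g"
  shows "continuous_map (prod_topology (subtopology euclideanreal {0..1}) (classifying_space S m))
     (classifying_space S m) (HH S m e f g)"
proof -
  have cs: "compact_space (subtopology euclideanreal {0..(1::real)})"
    by (rule compact_space_subtopology) simp
  have loc: "locally_compact_space (subtopology euclideanreal {0..(1::real)})"
    by (rule compact_imp_locally_compact_space[OF cs])
  have haus: "Hausdorff_space (subtopology euclideanreal {0..(1::real)}) \<or> regular_space (subtopology euclideanreal {0..(1::real)})"
    using Hausdorff_space_subtopology[OF Hausdorff_space_euclidean] by blast
  have q: "quotient_map (prod_topology (subtopology euclideanreal {0..1}) (simplices_sum (nerve_simplices S)))
     (prod_topology (subtopology euclideanreal {0..1}) (classifying_space S m)) (\<lambda>(x, y). (x, QS S m y))"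
    unfolding classifying_space_def by (rule quotient_map_prod_right[OF loc haus quotient_map_real])
  show ?thesis
  proof (rule continuous_compose_quotient_map[OF q])
    show "continuous_map (prod_topology (subtopology euclideanreal {0..1}) (simplices_sum (nerve_simplices S)))
      (classifying_space S m) (HH S m e f g \<circ> (\<lambda>(x, y). (x, QS S m y)))"
    proof (rule continuous_map_eq[OF H0_cont[OF G]])
      fix x assume x: "x \<in> topspace (prod_topology (subtopology euclideanreal {0..1}) (simplices_sum (nerve_simplices S)))"
      obtain s p where xx: "x = (s, p)" by (cases x)
      have sp: "0 \<le> s" "s \<le> 1" "p \<in> topspace (simplices_sum (nerve_simplices S))" using x xx by auto
      show "H0 S m e f g x = (HH S m e f g \<circ> (\<lambda>(x, y). (x, QS S m y))) x"
        unfolding xx using HH_class[OF G sp] by simp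
    qed
  qed
qed

lemma topspace_cs:
  "topspace (classifying_space S m) = QS S m ` topspace (simplices_sum (nerve_simplices S))"
  unfolding classifying_space_def by (rule topspace_real)

lemma Bmap_homotopic:
  assumes G: "good S m e f g"
  shows "homotopic_with (\<lambda>x. True) (classifying_space S m) (classifying_space S m) (Bmap S S m f) (Bmap S S m g)"
proof -
  have Ssg: "semigroup_on S m" and e: "e \<in> S" and fS: "\<And>x. x \<in> S \<Longrightarrow> f x \<in> S" and gS: "\<And>x. x \<in> S \<Longrightarrow> g x \<in> S"
    and fh: "hom_on S m f" and gh: "hom_on S m g"
    using G unfolding good_def by blast+
  have end0: "HH S m e f g (0, x) = Bmap S S m f x" if x: "x \<in> topspace (classifying_space S m)" for x
  proof -
    obtain p where p: "p \<in> topspace (simplices_sum (nerve_simplices S))" and xp: "x = QS S m p"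
      using x unfolding topspace_cs by blast
    obtain n xs t where pp: "p = ((n, xs), t)" by (metis prod.collapse)
    have xs: "xs \<in> nerve_simplices S n" and t: "t \<in> standard_simplex n" using p pp by (auto simp: topspace_simplices_sum)
    have nn: "\<And>l. 0 \<le> t l" by (rule ss_nonneg[OF t])
    have v: "valid t (1 - 0) n" using cum_le1[of t n n, OF t] ss_sum[OF t] by (simp add: valid_def)
    have "HH S m e f g (0, x) = H0 S m e f g (0, ((n, xs), t))" unfolding xp pp by (rule HH_class[OF G _ _ p[unfolded pp]]) simp_all
    also have "\<dots> = QS S m ((Suc n, sig e f g n xs), hu t (1 - 0))" by (rule H0_eq[OF G xs t _ _ _ v]) simp_all
    also have "hu t (1 - 0) = simplical_face (Suc n) t" using hu_cut[of t 1 n, OF nn] ss_sum[OF t] by simp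
    also have "QS S m ((Suc n, sig e f g n xs), simplical_face (Suc n) t) = QS S m ((n, nerve_face m (Suc n) (Suc n) (sig e f g n xs)), t)"
      by (rule class_eq_rel[OF rel_intro[where X="nerve_simplices S" and d="nerve_face m" and n=n, OF sig_in[OF xs _ e fS gS] _ t], symmetric]) simp_all
    also have "nerve_face m (Suc n) (Suc n) (sig e f g n xs) = map f xs"
      using xs by (simp add: sig_end1 nerve_simplices_def)
    also have "QS S m ((n, map f xs), t) = Bmap S S m f x"
      unfolding xp pp by (rule Bmap_class[OF Ssg fh fS xs t, symmetric])
    finally show ?thesis .
  qed
  have end1: "HH S m e f g (1, x) = Bmap S S m g x" if x: "x \<in> topspace (classifying_space S m)" for x
  proof -
    obtain p where p: "p \<in> topspace (simplices_sum (nerve_simplices S))" and xp: "x = QS S m p"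
      using x unfolding topspace_cs by blast
    obtain n xs t where pp: "p = ((n, xs), t)" by (metis prod.collapse)
    have xs: "xs \<in> nerve_simplices S n" and t: "t \<in> standard_simplex n" using p pp by (auto simp: topspace_simplices_sum)
    have nn: "\<And>l. 0 \<le> t l" by (rule ss_nonneg[OF t])
    have v: "valid t (1 - 1) 0" using cum_nonneg[of t 1, OF nn] by (simp add: valid_def)
    have "HH S m e f g (1, x) = H0 S m e f g (1, ((n, xs), t))" unfolding xp pp by (rule HH_class[OF G _ _ p[unfolded pp]]) simp_all
    also have "\<dots> = QS S m ((Suc n, sig e f g 0 xs), hu t (1 - 1))" by (rule H0_eq[OF G xs t _ _ _ v]) simp_all
    also have "hu t (1 - 1) = simplical_face 0 t" using hu_zero[OF nn] by simp
    also have "QS S m ((Suc n, sig e f g 0 xs), simplical_face 0 t) = QS S m ((n, nerve_face m (Suc n) 0 (sig e f g 0 xs)), t)"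
      by (rule class_eq_rel[OF rel_intro[where X="nerve_simplices S" and d="nerve_face m" and n=n, OF sig_in[OF xs _ e fS gS] _ t], symmetric]) simp_all
    also have "nerve_face m (Suc n) 0 (sig e f g 0 xs) = map g xs"
      by (rule sig_end0)
    also have "QS S m ((n, map g xs), t) = Bmap S S m g x"
      unfolding xp pp by (rule Bmap_class[OF Ssg gh gS xs t, symmetric])
    finally show ?thesis .
  qed
  have iff: "homotopic_with (\<lambda>x. True) (classifying_space S m) (classifying_space S m) (Bmap S S m f) (Bmap S S m g) \<longleftrightarrow>
           (\<exists>h. continuous_map (prod_topology (subtopology euclideanreal {0..1}) (classifying_space S m)) (classifying_space S m) h \<and>
              (\<forall>x \<in> topspace (classifying_space S m). h(0,x) = Bmap S S m f x) \<and>
              (\<forall>x \<in> topspace (classifying_space S m). h(1,x) = Bmap S S m g x) \<and>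
              (\<forall>t \<in> {0..1}. (\<lambda>x. True) (\<lambda>x. h(t, x))))"
    by (rule homotopic_with) simp
  show ?thesis unfolding iff
  proof (intro exI[of _ "HH S m e f g"] conjI ballI)
    show "continuous_map (prod_topology (subtopology euclideanreal {0..1}) (classifying_space S m)) (classifying_space S m) (HH S m e f g)"
      by (rule HH_cont[OF G])
  qed (simp_all add: end0 end1)
qed


lemma homotopic_transfer:
  assumes hom: "homotopic_with (\<lambda>x. True) X Y p q"
    and pp: "\<And>x. x \<in> topspace X \<Longrightarrow> p' x = p x" and qq: "\<And>x. x \<in> topspace X \<Longrightarrow> q' x = q x"
  shows "homotopic_with (\<lambda>x. True) X Y p' q'"
proof -
  have i1: "homotopic_with (\<lambda>x. True) X Y p q \<longleftrightarrow>
           (\<exists>h. continuous_map (prod_topology (subtopology euclideanreal {0..1}) X) Y h \<and>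
              (\<forall>x \<in> topspace X. h(0,x) = p x) \<and> (\<forall>x \<in> topspace X. h(1,x) = q x) \<and>
              (\<forall>t \<in> {0..1}. (\<lambda>x. True) (\<lambda>x. h(t, x))))"
    by (rule homotopic_with) simp
  have i2: "homotopic_with (\<lambda>x. True) X Y p' q' \<longleftrightarrow>
           (\<exists>h. continuous_map (prod_topology (subtopology euclideanreal {0..1}) X) Y h \<and>
              (\<forall>x \<in> topspace X. h(0,x) = p' x) \<and> (\<forall>x \<in> topspace X. h(1,x) = q' x) \<and>
              (\<forall>t \<in> {0..1}. (\<lambda>x. True) (\<lambda>x. h(t, x))))"
    by (rule homotopic_with) simp
  from hom obtain h where h: "continuous_map (prod_topology (subtopology euclideanreal {0..1}) X) Y h"
    "\<forall>x \<in> topspace X. h(0,x) = p x" "\<forall>x \<in> topspace X. h(1,x) = q x"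
    unfolding i1 by blast
  show ?thesis unfolding i2
    by (rule exI[of _ h]) (use h pp qq in simp)
qed

lemma retract_equiv:
  assumes S: "semigroup_on S m" and TS: "T \<subseteq> S" and Tsg: "semigroup_on T m"
    and hT: "\<And>x. x \<in> S \<Longrightarrow> h x \<in> T" and hh: "hom_on S m h" and hid: "\<And>y. y \<in> T \<Longrightarrow> h y = y"
    and hom: "homotopic_with (\<lambda>x. True) (classifying_space S m) (classifying_space S m) (Bmap S S m id) (Bmap S S m h)"
  shows "classifying_space S m homotopy_equivalent_space classifying_space T m"
proof -
  let ?f = "Bmap S T m h" and ?g = "Bmap T S m id"
  have idT: "\<And>x. x \<in> T \<Longrightarrow> id x \<in> S" using TS by auto
  have idh: "hom_on T m id" by (simp add: hom_on_def)
  have idhS: "hom_on S m id" by (simp add: hom_on_def)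
  have idS: "\<And>x. x \<in> S \<Longrightarrow> id x \<in> S" by simp
  have hS: "\<And>x. x \<in> S \<Longrightarrow> h x \<in> S" using hT TS by blast
  have cf: "continuous_map (classifying_space S m) (classifying_space T m) ?f" by (rule Bmap_cont[OF S hh hT])
  have cg: "continuous_map (classifying_space T m) (classifying_space S m) ?g" by (rule Bmap_cont[OF Tsg idh idT])
  have gf: "(?g \<circ> ?f) x = Bmap S S m h x" and idx: "id x = Bmap S S m id x"
    if x: "x \<in> topspace (classifying_space S m)" for x
  proof -
    obtain p where p: "p \<in> topspace (simplices_sum (nerve_simplices S))" and xp: "x = QS S m p"
      using x unfolding topspace_cs by blast
    obtain n xs t where pp: "p = ((n, xs), t)" by (metis prod.collapse)
    have xs: "xs \<in> nerve_simplices S n" and t: "t \<in> standard_simplex n" using p pp by (auto simp: topspace_simplices_sum)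
    have hxs: "map h xs \<in> nerve_simplices T n" by (rule map_in[OF hT xs])
    have "(?g \<circ> ?f) x = ?g (QS T m ((n, map h xs), t))" unfolding xp pp using Bmap_class[OF S hh hT xs t] by simp
    also have "\<dots> = QS S m ((n, map id (map h xs)), t)" by (rule Bmap_class[OF Tsg idh idT hxs t])
    also have "\<dots> = Bmap S S m h x" unfolding xp pp using Bmap_class[OF S hh hS xs t] by simp
    finally show "(?g \<circ> ?f) x = Bmap S S m h x" .
    have "Bmap S S m id x = QS S m ((n, map id xs), t)" unfolding xp pp by (rule Bmap_class[OF S idhS idS xs t])
    then show "id x = Bmap S S m id x" unfolding xp pp by simp
  qed
  have fg: "(?f \<circ> ?g) x = id x" if x: "x \<in> topspace (classifying_space T m)" for x
  proof -
    obtain p where p: "p \<in> topspace (simplices_sum (nerve_simplices T))" and xp: "x = QS T m p"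
      using x unfolding topspace_cs by blast
    obtain n xs t where pp: "p = ((n, xs), t)" by (metis prod.collapse)
    have xs: "xs \<in> nerve_simplices T n" and t: "t \<in> standard_simplex n" using p pp by (auto simp: topspace_simplices_sum)
    have xsS: "xs \<in> nerve_simplices S n" using map_in[of T id S xs n, OF idT xs] by simp
    have mh: "map h xs = xs"
    proof -
      have "set xs \<subseteq> T" using xs unfolding nerve_simplices_def by blast
      then show ?thesis using hid by (induction xs) auto
    qed
    have "(?f \<circ> ?g) x = ?f (QS S m ((n, map id xs), t))" unfolding xp pp using Bmap_class[OF Tsg idh idT xs t] by (simp add: id_def)
    also have "\<dots> = ?f (QS S m ((n, xs), t))" by simp
    also have "\<dots> = QS T m ((n, map h xs), t)" by (rule Bmap_class[OF S hh hT xsS t])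
    also have "\<dots> = id x" unfolding xp pp mh by simp
    finally show ?thesis .
  qed
  have h1: "homotopic_with (\<lambda>x. True) (classifying_space S m) (classifying_space S m) (?g \<circ> ?f) id"
    by (rule homotopic_transfer[OF hom[unfolded homotopic_with_sym[of _ _ _ "Bmap S S m id"]]]) (metis gf o_apply, metis idx id_apply)
  have h2: "homotopic_with (\<lambda>x. True) (classifying_space T m) (classifying_space T m) (?f \<circ> ?g) id"
    by (rule homotopic_with_equal) (simp_all add: continuous_map_compose[OF cg cf], metis fg o_apply id_apply)
  show ?thesis unfolding homotopy_equivalent_space_def
    using cf cg h1 h2 by blast
qed

lemma eSe_facts:
  assumes S: "semigroup_on S m" and e: "e \<in> S" and ee: "m e e = e" and y: "y \<in> {m (m e x) e | x. x \<in> S}"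
  shows "y \<in> S" "m e y = y" "m y e = y"
proof -
  obtain z where z: "z \<in> S" "y = m (m e z) e" using y by blast
  have ez: "m e z \<in> S" by (rule sg_closed[OF S e z(1)])
  show "y \<in> S" unfolding z(2) by (rule sg_closed[OF S ez e])
  have "m e y = m (m e (m e z)) e" unfolding z(2) using sg_assoc[OF S e ez e] by simp
  also have "m e (m e z) = m (m e e) z" using sg_assoc[OF S e e z(1)] by simp
  finally show "m e y = y" unfolding z(2) ee by simp
  have "m y e = m (m e z) (m e e)" unfolding z(2) using sg_assoc[OF S ez e e] by simp
  then show "m y e = y" unfolding z(2) ee by simp
qed

theorem lemma7p4:
  fixes S :: "'a set" and m :: "'a \<Rightarrow> 'a \<Rightarrow> 'a" and e :: 'a
  assumes "semigroup_on S m"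
    and "e \<in> S" and "m e e = e"
    and "{m (m e x) e | x. x \<in> S} = {m x e | x. x \<in> S} \<or>
         {m (m e x) e | x. x \<in> S} = {m e x | x. x \<in> S}"
  shows "classifying_space S m homotopy_equivalent_space
         classifying_space {m (m e x) e | x. x \<in> S} m"
proof -
  note S = assms(1) and e = assms(2) and ee = assms(3)
  define T where "T = {m (m e x) e | x. x \<in> S}"
  have TS: "T \<subseteq> S" using eSe_facts(1)[OF S e ee] unfolding T_def by blast
  have eT: "\<And>y. y \<in> T \<Longrightarrow> m e y = y" using eSe_facts(2)[OF S e ee] unfolding T_def by blast
  have Te: "\<And>y. y \<in> T \<Longrightarrow> m y e = y" using eSe_facts(3)[OF S e ee] unfolding T_def by blast
  have yS: "\<And>y. y \<in> T \<Longrightarrow> y \<in> S" using TS by blast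
  have Tassoc: "\<forall>x\<in>T. \<forall>y\<in>T. \<forall>z\<in>T. m (m x y) z = m x (m y z)"
    using sg_assoc[OF S] yS by blast
  from assms(4) show ?thesis
  proof
    assume c: "{m (m e x) e | x. x \<in> S} = {m x e | x. x \<in> S}"
    define h where "h = (\<lambda>x. m x e)"
    have hT: "\<And>x. x \<in> S \<Longrightarrow> h x \<in> T" unfolding T_def c h_def by blast
    have hid: "\<And>y. y \<in> T \<Longrightarrow> h y = y" unfolding h_def by (rule Te)
    have hS: "\<And>x. x \<in> S \<Longrightarrow> h x \<in> S" using hT yS by blast
    have hh: "hom_on S m h" unfolding hom_on_def
    proof (intro ballI)
      fix x y assume x: "x \<in> S" and y: "y \<in> S"
      have ye: "m y e \<in> S" by (rule sg_closed[OF S y e])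
      have "m (m x e) (m y e) = m x (m e (m y e))" by (rule sg_assoc[OF S x e ye])
      also have "m e (m y e) = m y e" using eT[OF hT[OF y]] unfolding h_def .
      also have "m x (m y e) = m (m x y) e" by (rule sg_assoc[OF S x y e, symmetric])
      finally show "h (m x y) = m (h x) (h y)" unfolding h_def by simp
    qed
    have Tsg: "semigroup_on T m" unfolding semigroup_on_def
    proof (intro conjI ballI)
      fix x y assume x: "x \<in> T" and y: "y \<in> T"
      have xy: "m x y \<in> S" by (rule sg_closed[OF S yS[OF x] yS[OF y]])
      have "m x y = m x (m y e)" using Te[OF y] by simp
      also have "\<dots> = h (m x y)" unfolding h_def by (rule sg_assoc[OF S yS[OF x] yS[OF y] e, symmetric])
      finally show "m x y \<in> T" using hT[OF xy] by simp
    next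
      fix x y z assume "x \<in> T" "y \<in> T" "z \<in> T"
      then show "m (m x y) z = m x (m y z)" using Tassoc by blast
    qed
    have G: "good S m e id h" unfolding good_def
    proof (intro conjI ballI)
      show "e \<in> S" by (rule e)
      show "semigroup_on S m" by (rule S)
      show "hom_on S m id" by (simp add: hom_on_def)
      show "hom_on S m h" by (rule hh)
      fix a assume a: "a \<in> S"
      show "id a \<in> S" using a by simp
      show "h a \<in> S" by (rule hS[OF a])
      show "m (id a) e = m e (h a)" using eT[OF hT[OF a]] unfolding h_def by simp
    qed
    have hom: "homotopic_with (\<lambda>x. True) (classifying_space S m) (classifying_space S m) (Bmap S S m id) (Bmap S S m h)"
      by (rule Bmap_homotopic[OF G])
    show ?thesis using retract_equiv[OF S TS Tsg hT hh hid hom] unfolding T_def .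
  next
    assume c: "{m (m e x) e | x. x \<in> S} = {m e x | x. x \<in> S}"
    define h where "h = (\<lambda>x. m e x)"
    have hT: "\<And>x. x \<in> S \<Longrightarrow> h x \<in> T" unfolding T_def c h_def by blast
    have hid: "\<And>y. y \<in> T \<Longrightarrow> h y = y" unfolding h_def by (rule eT)
    have hS: "\<And>x. x \<in> S \<Longrightarrow> h x \<in> S" using hT yS by blast
    have hh: "hom_on S m h" unfolding hom_on_def
    proof (intro ballI)
      fix x y assume x: "x \<in> S" and y: "y \<in> S"
      have ex: "m e x \<in> S" by (rule sg_closed[OF S e x])
      have "m (m e x) (m e y) = m (m (m e x) e) y" by (rule sg_assoc[OF S ex e y, symmetric])
      also have "m (m e x) e = m e x" using Te[OF hT[OF x]] unfolding h_def .
      also have "m (m e x) y = m e (m x y)" by (rule sg_assoc[OF S e x y])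
      finally show "h (m x y) = m (h x) (h y)" unfolding h_def by simp
    qed
    have Tsg: "semigroup_on T m" unfolding semigroup_on_def
    proof (intro conjI ballI)
      fix x y assume x: "x \<in> T" and y: "y \<in> T"
      have xy: "m x y \<in> S" by (rule sg_closed[OF S yS[OF x] yS[OF y]])
      have "m x y = m (m e x) y" using eT[OF x] by simp
      also have "\<dots> = h (m x y)" unfolding h_def by (rule sg_assoc[OF S e yS[OF x] yS[OF y]])
      finally show "m x y \<in> T" using hT[OF xy] by simp
    next
      fix x y z assume "x \<in> T" "y \<in> T" "z \<in> T"
      then show "m (m x y) z = m x (m y z)" using Tassoc by blast
    qed
    have G: "good S m e h id" unfolding good_def
    proof (intro conjI ballI)
      show "e \<in> S" by (rule e)
      show "semigroup_on S m" by (rule S)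
      show "hom_on S m id" by (simp add: hom_on_def)
      show "hom_on S m h" by (rule hh)
      fix a assume a: "a \<in> S"
      show "id a \<in> S" using a by simp
      show "h a \<in> S" by (rule hS[OF a])
      show "m (h a) e = m e (id a)" using Te[OF hT[OF a]] unfolding h_def by simp
    qed
    have hom: "homotopic_with (\<lambda>x. True) (classifying_space S m) (classifying_space S m) (Bmap S S m id) (Bmap S S m h)"
      using Bmap_homotopic[OF G] homotopic_with_sym by blast
    show ?thesis using retract_equiv[OF S TS Tsg hT hh hid hom] unfolding T_def .
  qed
qed

end
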